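(* Let $\phi=\tilde p/p$ be a rational inner function on $\mathbb{D}^2$ and let $(z_1,z_2)\in\mathbb{D}^2$. Then $$\mathfrak D_{(z_1,z_2)}(\phi)=\frac{1}{4\pi^2}\int_{\mathbb{T}^2}\frac{1-|\phi(\eta_1,z_2)|^2-|\phi(z_1,\eta_2)|^2+|\phi(z_1,z_2)|^2}{|\eta_1-z_1|^2|\eta_2-z_2|^2}|d\eta|.$$
   Context: $\phi=\tilde p/p$ where $p\in\mathbb{C}[z_1,z_2]$ has bidegree $(m,n)$, no zeros in $\mathbb{D}^2$, is atoral, and $\tilde p(z)=z_1^mz_2^n\overline{p(1/\bar z_1,1/\bar z_2)}$. For $f$ holomorphic on $\mathbb{D}^2$ with radial boundary values and a point $(z_1,z_2)\in\overline{\mathbb{D}}^2$, the local Dirichlet integral is $\mathfrak D_{(z_1,z_2)}(f)=\frac{1}{4\pi^2}\int_{\mathbb{T}^2}\frac{|f(z_1,z_2)-f(z_1,\eta_2)-f(\eta_1,z_2)+f(\eta_1,\eta_2)|^2}{|z_1-\eta_1|^2|z_2-\eta_2|^2}|d\eta|$, where values at points with a coordinate on $\mathbb{T}$ are radial limits. *)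

theory Defs
  imports "HOL-Analysis.Analysis"
begin

text \<open>Bivariate complex polynomials are represented by coefficient functions
  c :: nat => nat => complex together with a bidegree (m,n); the polynomial is
  sum over i<=m, j<=n of c i j * z1^i * z2^j.\<close>

definition eval2 :: "(nat \<Rightarrow> nat \<Rightarrow> complex) \<Rightarrow> nat \<Rightarrow> nat \<Rightarrow> complex \<Rightarrow> complex \<Rightarrow> complex" where
  "eval2 c m n z1 z2 = (\<Sum>i\<le>m. \<Sum>j\<le>n. c i j * z1 ^ i * z2 ^ j)"

definition has_bidegree :: "(nat \<Rightarrow> nat \<Rightarrow> complex) \<Rightarrow> nat \<Rightarrow> nat \<Rightarrow> bool" where
  "has_bidegree c m n \<longleftrightarrow> (\<exists>j\<le>n. c m j \<noteq> 0) \<and> (\<exists>i\<le>m. c i n \<noteq> 0)"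

text \<open>Coefficients of the reflection p~(z) = z1^m z2^n conj(p(1/conj z1, 1/conj z2)).\<close>
definition refl2 :: "(nat \<Rightarrow> nat \<Rightarrow> complex) \<Rightarrow> nat \<Rightarrow> nat \<Rightarrow> (nat \<Rightarrow> nat \<Rightarrow> complex)" where
  "refl2 c m n = (\<lambda>i j. cnj (c (m - i) (n - j)))"

definition is_poly2 :: "(complex \<Rightarrow> complex \<Rightarrow> complex) \<Rightarrow> bool" where
  "is_poly2 f \<longleftrightarrow> (\<exists>c N M. \<forall>z1 z2. f z1 z2 = eval2 c N M z1 z2)"

definition atoral :: "(nat \<Rightarrow> nat \<Rightarrow> complex) \<Rightarrow> nat \<Rightarrow> nat \<Rightarrow> bool" where
  "atoral c m n \<longleftrightarrow>
     (\<forall>q r s. is_poly2 q \<and> is_poly2 r \<and> is_poly2 s \<and>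
        (\<forall>z1 z2. eval2 c m n z1 z2 = q z1 z2 * r z1 z2) \<and>
        (\<forall>z1 z2. eval2 (refl2 c m n) m n z1 z2 = q z1 z2 * s z1 z2)
        \<longrightarrow> (\<exists>k. \<forall>z1 z2. q z1 z2 = k))"

definition bval :: "(complex \<Rightarrow> complex \<Rightarrow> complex) \<Rightarrow> complex \<Rightarrow> complex \<Rightarrow> complex" where
  "bval f a b = Lim (at_left (1::real))
      (\<lambda>r. f (if norm a < 1 then a else complex_of_real r * a)
             (if norm b < 1 then b else complex_of_real r * b))"

text \<open>Local Dirichlet integral; |d eta| is arc length on T^2, parametrised by
  eta_k = exp(i t_k), t in [0,2 pi]^2.\<close>
definition local_dirichlet :: "(complex \<Rightarrow> complex \<Rightarrow> complex) \<Rightarrow> complex \<Rightarrow> complex \<Rightarrow> real" where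
  "local_dirichlet f z1 z2 = 1 / (4 * pi ^ 2) *
     (LINT t:{0..2*pi} \<times> {0..2*pi}|lborel.
        (let e1 = cis (fst t); e2 = cis (snd t) in
          (cmod (bval f z1 z2 - bval f z1 e2 - bval f e1 z2 + bval f e1 e2))\<^sup>2
          / ((cmod (z1 - e1))\<^sup>2 * (cmod (z2 - e2))\<^sup>2)))"

end

theory Submission
  imports Defs "HOL-Complex_Analysis.Complex_Analysis" "HOL-Computational_Algebra.Computational_Algebra" "HOL-Computational_Algebra.Field_as_Ring"
begin

definition ev :: "complex poly poly \<Rightarrow> complex \<Rightarrow> complex \<Rightarrow> complex" where
  "ev X x y = poly (poly X [:x:]) y"

lemma ev_mult[simp]: "ev (X*Y) x y = ev X x y * ev Y x y" by (simp add: ev_def)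
lemma ev_add[simp]: "ev (X+Y) x y = ev X x y + ev Y x y" by (simp add: ev_def)
lemma ev_const[simp]: "ev [:a:] x y = poly a y" by (simp add: ev_def)
lemma ev_sum: "ev (sum f A) x y = (\<Sum>i\<in>A. ev (f i) x y)" by (simp add: ev_def poly_sum)
lemma ev_monom: "ev (monom (monom a j) i) x y = a * x^i * y^j"
  by (simp add: ev_def poly_monom)

lemma ev_map: "ev H x y = poly (map_poly (\<lambda>a. poly a y) H) x"
proof (induction H)
  case (pCons a H)
  then show ?case by (simp add: ev_def map_poly_pCons)
qed (simp add: ev_def)

definition P2 :: "(nat \<Rightarrow> nat \<Rightarrow> complex) \<Rightarrow> nat \<Rightarrow> nat \<Rightarrow> complex poly poly" where
  "P2 c m n = (\<Sum>i\<le>m. \<Sum>j\<le>n. monom (monom (c i j) j) i)"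

lemma ev_P2: "ev (P2 c m n) x y = eval2 c m n x y"
  by (simp add: P2_def eval2_def ev_sum ev_monom)

lemma coeff_P2: "coeff (coeff (P2 c m n) i) j = (if i \<le> m \<and> j \<le> n then c i j else 0)"
proof -
  have "coeff (coeff (P2 c m n) i) j = (\<Sum>ia\<le>m. \<Sum>ja\<le>n. (if ia = i then (if ja = j then c ia ja else 0) else 0))"
    unfolding P2_def coeff_sum by (intro sum.cong refl) (simp add: coeff_monom)
  also have "\<dots> = (\<Sum>ia\<le>m. (if ia = i then (if j \<le> n then c ia j else 0) else 0))"
    by (intro sum.cong refl) (auto simp: sum.delta')
  also have "\<dots> = (if i \<le> m \<and> j \<le> n then c i j else 0)"
    by (auto simp: sum.delta')
  finally show ?thesis .
qed

lemma poly_bound: fixes p :: "'a::comm_semiring_1 poly" assumes "degree p \<le> M" shows "poly p x = (\<Sum>i\<le>M. coeff p i * x^i)"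
  unfolding poly_altdef
  by (rule sum.mono_neutral_left) (use assms in \<open>auto simp: coeff_eq_0\<close>)

lemma ev_expand:
  assumes "degree X \<le> N" "\<And>i. degree (coeff X i) \<le> M"
  shows "ev X x y = (\<Sum>i\<le>N. \<Sum>j\<le>M. coeff (coeff X i) j * x^i * y^j)"
proof -
  have "ev X x y = poly (map_poly (\<lambda>a. poly a y) X) x" by (rule ev_map)
  also have "\<dots> = (\<Sum>i\<le>N. coeff (map_poly (\<lambda>a. poly a y) X) i * x^i)"
    by (rule poly_bound, rule degree_le) (use assms(1) in \<open>auto simp: coeff_map_poly coeff_eq_0\<close>)
  also have "\<dots> = (\<Sum>i\<le>N. poly (coeff X i) y * x^i)"
    by (simp add: coeff_map_poly)
  also have "\<dots> = (\<Sum>i\<le>N. (\<Sum>j\<le>M. coeff (coeff X i) j * y^j) * x^i)"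
    using poly_bound[OF assms(2)] by simp
  also have "\<dots> = (\<Sum>i\<le>N. \<Sum>j\<le>M. coeff (coeff X i) j * x^i * y^j)"
    by (simp add: sum_distrib_right sum_distrib_left mult_ac)
  finally show ?thesis .
qed

lemma is_poly2_ev: "is_poly2 (\<lambda>x y. ev X x y)"
proof -
  define M where "M = (\<Sum>i\<le>degree X. degree (coeff X i))"
  have "degree (coeff X i) \<le> M" for i
  proof (cases "i \<le> degree X")
    case True
    then show ?thesis unfolding M_def
      by (intro member_le_sum) auto
  next
    case False
    then show ?thesis by (simp add: coeff_eq_0)
  qed
  from ev_expand[OF order.refl this]
  show ?thesis unfolding is_poly2_def eval2_def
    by (intro exI[of _ "\<lambda>i j. coeff (coeff X i) j"] exI[of _ "degree X"] exI[of _ M]) simp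
qed

lemma gauss_aux:
  fixes G P W :: "complex poly poly"
  assumes "content G = 1" "c \<noteq> 0" "smult c P = G * W"
  shows "G dvd P"
proof -
  have "content (smult c P) = content (G * W)" using assms(3) by simp
  hence "normalize c * content P = content W" using assms(1) by (simp add: content_mult)
  hence cd: "c dvd content W" by (metis dvd_triv_left normalize_dvd_iff)
  have ci: "c dvd coeff W i" for i using cd content_dvd_coeff dvd_trans by blast
  define W' where "W' = map_poly (\<lambda>a. a div c) W"
  have "W = smult c W'"
    by (rule poly_eqI) (simp add: W'_def coeff_map_poly ci dvd_mult_div_cancel)
  hence "smult c P = smult c (G * W')" using assms(3) by simp
  hence "c * coeff P i = c * coeff (G * W') i" for i by (metis coeff_smult)
  hence "P = G * W'" using assms(2) by (intro poly_eqI) simp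
  thus ?thesis by simp
qed

lemma bezout_pp:
  fixes P Q :: "complex poly poly"
  assumes P0: "P \<noteq> 0" and nc: "\<And>H U V. P = H*U \<Longrightarrow> Q = H*V \<Longrightarrow> degree H = 0"
  shows "\<exists>A B D. D \<noteq> 0 \<and> A*P + B*Q = [:D:]"
proof -
  define S where "S = {H. (\<exists>A B. H = A*P + B*Q) \<and> H \<noteq> 0}"
  have "P = 1*P + 0*Q" by simp
  hence PS: "P \<in> S" unfolding S_def using P0 by blast
  define k where "k = (LEAST k. \<exists>H\<in>S. degree H = k)"
  obtain H where HS: "H \<in> S" and Hk: "degree H = k"
    using LeastI_ex[of "\<lambda>k. \<exists>H\<in>S. degree H = k"] PS unfolding k_def by blast
  have kmin: "k \<le> degree H'" if "H' \<in> S" for H'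
    unfolding k_def using that by (auto intro: Least_le)
  obtain A0 B0 where H: "H = A0*P + B0*Q" and H0: "H \<noteq> 0" using HS unfolding S_def by blast
  show ?thesis
  proof (cases "k = 0")
    case True
    then have "H = [:coeff H 0:]" using Hk by (simp add: degree_0_id)
    moreover have "coeff H 0 \<noteq> 0" using H0 \<open>H = [:coeff H 0:]\<close> by (metis pCons_0_0)
    ultimately show ?thesis using H by metis
  next
    case False
    have dv: "primitive_part H dvd R" if R: "R = A*P + B*Q" for R A B
    proof -
      obtain q r where qr: "pseudo_divmod R H = (q, r)" by fastforce
      define l where "l = coeff H (degree H) ^ (Suc (degree R) - degree H)"
      have l0: "l \<noteq> 0" unfolding l_def using H0 by simp
      have e1: "smult l R = H * q + r" and e2: "r = 0 \<or> degree r < degree H"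
        using pseudo_divmod[OF H0 qr] unfolding l_def by auto
      have "r = smult l R - H * q" using e1 by simp
      also have "\<dots> = (smult l A - q*A0) * P + (smult l B - q*B0) * Q"
        unfolding R H by (simp add: algebra_simps smult_add_right mult_smult_left)
      finally have rr: "r = (smult l A - q*A0) * P + (smult l B - q*B0) * Q" .
      have rS: "r \<in> S" if "r \<noteq> 0" unfolding S_def using rr that by blast
      have "r = 0"
      proof (rule ccontr)
        assume "r \<noteq> 0"
        hence "k \<le> degree r" using kmin rS by blast
        thus False using e2 Hk \<open>r \<noteq> 0\<close> by simp
      qed
      hence "smult l R = H * q" using e1 by simp
      also have "H * q = smult (content H) (primitive_part H) * q" by simp
      also have "\<dots> = primitive_part H * smult (content H) q" by (simp only: mult_smult_left mult_smult_right mult.commute)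
      finally have "smult l R = primitive_part H * smult (content H) q" .
      thus ?thesis using gauss_aux[OF content_primitive_part[OF H0] l0] by blast
    qed
    obtain U where "P = primitive_part H * U" using dv[of P 1 0] by (auto elim: dvdE)
    moreover obtain V where "Q = primitive_part H * V" using dv[of Q 0 1] by (auto elim: dvdE)
    ultimately have "degree (primitive_part H) = 0" using nc by blast
    thus ?thesis using False Hk by simp
  qed
qed

lemma atoral_nocommon:
  assumes at: "atoral c m n" and PU: "P2 c m n = H*U" and QV: "P2 (refl2 c m n) m n = H*V"
  shows "degree H = 0"
proof (rule ccontr)
  assume dH: "degree H \<noteq> 0"
  note inst = at[unfolded atoral_def, rule_format, of "\<lambda>x y. ev H x y" "\<lambda>x y. ev U x y" "\<lambda>x y. ev V x y"]
  have "\<exists>k. \<forall>z1 z2. ev H z1 z2 = k"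
    apply (rule inst)
    using PU QV by (simp add: is_poly2_ev flip: ev_P2)
  then obtain k where k: "\<And>x y. ev H x y = k" by blast
  have H0: "H \<noteq> 0" using dH by auto
  hence "lead_coeff H \<noteq> 0" by simp
  then obtain y0 where y0: "poly (lead_coeff H) y0 \<noteq> 0" using poly_all_0_iff_0 by blast
  define h where "h = map_poly (\<lambda>a. poly a y0) H"
  have "coeff h (degree H) \<noteq> 0" using y0 by (simp add: h_def coeff_map_poly)
  hence dh: "degree H \<le> degree h" by (rule le_degree)
  have "poly h x = poly [:k:] x" for x using k[of x y0] by (simp add: ev_map h_def)
  hence "h = [:k:]" using poly_eq_poly_eq_iff by blast
  thus False using dh dH by simp
qed

lemma bideg_P2_nz: assumes "has_bidegree c m n" shows "P2 c m n \<noteq> 0"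
proof
  obtain j where j: "j \<le> n" "c m j \<noteq> 0" using assms unfolding has_bidegree_def by blast
  assume "P2 c m n = 0"
  hence "coeff (coeff (P2 c m n) m) j = 0" by simp
  thus False using j by (simp add: coeff_P2)
qed

lemma common_zero_poly:
  assumes "has_bidegree c m n" "atoral c m n"
  shows "\<exists>D. D \<noteq> (0::complex poly) \<and> (\<forall>x y. eval2 c m n x y = 0 \<longrightarrow> eval2 (refl2 c m n) m n x y = 0 \<longrightarrow> poly D y = 0)"
proof -
  have "\<exists>A B D. D \<noteq> 0 \<and> A * P2 c m n + B * P2 (refl2 c m n) m n = [:D:]"
    apply (rule bezout_pp[OF bideg_P2_nz[OF assms(1)]])
    using atoral_nocommon[OF assms(2)] by blast
  then obtain A B D where D: "D \<noteq> 0" "A * P2 c m n + B * P2 (refl2 c m n) m n = [:D:]"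
    by blast
  have "ev A x y * eval2 c m n x y + ev B x y * eval2 (refl2 c m n) m n x y = poly D y" for x y
    using arg_cong[OF D(2), of "\<lambda>X. ev X x y"] by (simp add: ev_P2)
  hence "\<forall>x y. eval2 c m n x y = 0 \<longrightarrow> eval2 (refl2 c m n) m n x y = 0 \<longrightarrow> poly D y = 0"
    by (metis (no_types, lifting) add_0 mult_zero_right)
  thus ?thesis using D(1) by blast
qed

definition ctr :: "(nat \<Rightarrow> nat \<Rightarrow> complex) \<Rightarrow> (nat \<Rightarrow> nat \<Rightarrow> complex)" where
  "ctr c = (\<lambda>i j. c j i)"

lemma eval2_ctr: "eval2 (ctr c) n m x y = eval2 c m n y x"
  unfolding eval2_def ctr_def by (subst sum.swap) (simp add: mult_ac)

lemma refl2_ctr: "refl2 (ctr c) n m = ctr (refl2 c m n)"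
  by (simp add: refl2_def ctr_def)

lemma has_bidegree_ctr: "has_bidegree c m n \<Longrightarrow> has_bidegree (ctr c) n m"
  unfolding has_bidegree_def ctr_def by blast

lemma is_poly2_swap: assumes "is_poly2 f" shows "is_poly2 (\<lambda>x y. f y x)"
proof -
  obtain c N M where "\<And>z1 z2. f z1 z2 = eval2 c N M z1 z2" using assms unfolding is_poly2_def by blast
  hence "\<And>z1 z2. f z2 z1 = eval2 (ctr c) M N z1 z2" by (simp add: eval2_ctr)
  thus ?thesis unfolding is_poly2_def by blast
qed

lemma atoral_ctr: assumes "atoral c m n" shows "atoral (ctr c) n m"
  unfolding atoral_def
proof (intro allI impI)
  fix q r s :: "complex \<Rightarrow> complex \<Rightarrow> complex"
  assume a: "is_poly2 q \<and> is_poly2 r \<and> is_poly2 s \<and>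
        (\<forall>z1 z2. eval2 (ctr c) n m z1 z2 = q z1 z2 * r z1 z2) \<and>
        (\<forall>z1 z2. eval2 (refl2 (ctr c) n m) n m z1 z2 = q z1 z2 * s z1 z2)"
  note inst = assms[unfolded atoral_def, rule_format, of "\<lambda>x y. q y x" "\<lambda>x y. r y x" "\<lambda>x y. s y x"]
  have e1: "eval2 c m n z1 z2 = q z2 z1 * r z2 z1" for z1 z2
    using a eval2_ctr[of c n m z2 z1] by simp
  have e2: "eval2 (refl2 c m n) m n z1 z2 = q z2 z1 * s z2 z1" for z1 z2
    using a eval2_ctr[of "refl2 c m n" n m z2 z1] by (simp add: refl2_ctr)
  have "\<exists>k. \<forall>z1 z2. q z2 z1 = k"
    apply (rule inst)
    using a e1 e2 by (simp add: is_poly2_swap)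
  thus "\<exists>k. \<forall>z1 z2. q z1 z2 = k" by blast
qed

lemma unimod_pow: "cmod x = 1 \<Longrightarrow> i \<le> m \<Longrightarrow> x^(m-i) = x^m * cnj x ^ i"
proof -
  assume x: "cmod x = 1" "i \<le> m"
  have "x * cnj x = 1" using complex_norm_square[of x] x(1) by simp
  have "x^m = x^(m-i) * x^i" using x(2) by (simp add: power_add[symmetric])
  hence "x^m * cnj x ^ i = x^(m-i) * (x * cnj x)^i"
    by (simp add: power_mult_distrib)
  thus ?thesis using \<open>x * cnj x = 1\<close> by simp
qed

lemma refl_torus:
  assumes x: "cmod x = 1" and y: "cmod y = 1"
  shows "eval2 (refl2 c m n) m n x y = x^m * y^n * cnj (eval2 c m n x y)"
proof -
  have "eval2 (refl2 c m n) m n x y = (\<Sum>i\<le>m. \<Sum>j\<le>n. cnj (c (m-i) (n-j)) * x^i * y^j)"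
    by (simp add: eval2_def refl2_def)
  also have "\<dots> = (\<Sum>i\<le>m. \<Sum>j\<le>n. cnj (c i (n-j)) * x^(m-i) * y^j)"
    by (rule sum.reindex_bij_witness[of _ "\<lambda>i. m - i" "\<lambda>i. m - i"]) auto
  also have "\<dots> = (\<Sum>i\<le>m. \<Sum>j\<le>n. cnj (c i j) * x^(m-i) * y^(n-j))"
    by (rule sum.cong[OF refl], rule sum.reindex_bij_witness[of _ "\<lambda>i. n - i" "\<lambda>i. n - i"]) auto
  also have "\<dots> = (\<Sum>i\<le>m. \<Sum>j\<le>n. x^m * y^n * cnj (c i j * x^i * y^j))"
    by (intro sum.cong refl) (simp add: unimod_pow x y mult_ac)
  also have "\<dots> = x^m * y^n * cnj (eval2 c m n x y)"
    by (simp add: eval2_def sum_distrib_left)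
  finally show ?thesis .
qed

lemma torus_zeros_finite:
  assumes "has_bidegree c m n" "atoral c m n"
  shows "finite {(x,y). cmod x = 1 \<and> cmod y = 1 \<and> eval2 c m n x y = 0}"
proof -
  obtain D1 where D1: "D1 \<noteq> 0" "\<And>x y. eval2 c m n x y = 0 \<Longrightarrow> eval2 (refl2 c m n) m n x y = 0 \<Longrightarrow> poly D1 y = 0"
    using common_zero_poly[OF assms] by blast
  obtain D2 where D2: "D2 \<noteq> 0" "\<And>x y. eval2 (ctr c) n m x y = 0 \<Longrightarrow> eval2 (refl2 (ctr c) n m) n m x y = 0 \<Longrightarrow> poly D2 y = 0"
    using common_zero_poly[OF has_bidegree_ctr[OF assms(1)] atoral_ctr[OF assms(2)]] by blast
  have *: "poly D2 x = 0 \<and> poly D1 y = 0" if xy: "cmod x = 1" "cmod y = 1" "eval2 c m n x y = 0" for x y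
  proof -
    have r: "eval2 (refl2 c m n) m n x y = 0" using refl_torus[OF xy(1,2)] xy(3) by simp
    show "poly D2 x = 0 \<and> poly D1 y = 0"
      using D1(2)[OF xy(3) r] D2(2)[of y x] xy(3) r
      by (simp add: eval2_ctr refl2_ctr)
  qed
  have "{(x,y). cmod x = 1 \<and> cmod y = 1 \<and> eval2 c m n x y = 0} \<subseteq> {x. poly D2 x = 0} \<times> {y. poly D1 y = 0}"
    using * by auto
  moreover have "finite ({x. poly D2 x = 0} \<times> {y. poly D1 y = 0})"
    using D1 D2 by (simp add: poly_roots_finite)
  ultimately show ?thesis by (rule finite_subset)
qed


lemma kernel_identity:
  fixes e z :: complex
  assumes e: "cmod e = 1" and z: "cmod z < 1"
  shows "complex_of_real (1 / (cmod (e - z))^2) =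
         (e / (e - z) + cnj z * e / (1 - cnj z * e)) / complex_of_real (1 - (cmod z)^2)"
proof -
  have ee: "e * cnj e = 1" using complex_norm_square[of e] e by simp
  have w0: "e - z \<noteq> 0" using e z by auto
  have cw0: "cnj e - cnj z \<noteq> 0" using w0 by (metis complex_cnj_diff complex_cnj_zero_iff)
  have n1: "1 - cnj z * e \<noteq> 0"
  proof
    assume "1 - cnj z * e = 0"
    hence "cmod (cnj z * e) = 1" by (metis eq_iff_diff_eq_0 norm_one)
    thus False using e z by (simp add: norm_mult)
  qed
  have zz: "1 - z * cnj z \<noteq> 0"
  proof
    assume "1 - z * cnj z = 0"
    hence "complex_of_real ((cmod z)^2) = 1" using complex_norm_square[of z] by simp
    hence "(cmod z)^2 = 1" by (metis of_real_eq_1_iff)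
    thus False using z norm_ge_zero[of z] by (auto simp: power2_eq_1_iff)
  qed
  have a: "complex_of_real ((cmod (e - z))^2) = (e - z) * (cnj e - cnj z)"
    using complex_norm_square[of "e - z"] by simp
  have b: "complex_of_real (1 - (cmod z)^2) = 1 - z * cnj z"
    using complex_norm_square[of z] by simp
  have "complex_of_real (1 / (cmod (e - z))^2) = 1 / ((e - z) * (cnj e - cnj z))"
    using a by (metis of_real_1 of_real_divide)
  also have "\<dots> = (e / (e - z) + cnj z * e / (1 - cnj z * e)) / (1 - z * cnj z)"
  proof -
    have e0: "e \<noteq> 0" using e by auto
    have s1: "1 - cnj z * e = e * (cnj e - cnj z)" using ee by (simp add: algebra_simps)
    have s2: "cnj z * e / (1 - cnj z * e) = cnj z / (cnj e - cnj z)" using s1 e0 by simp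
    have s3: "e / (e - z) + cnj z / (cnj e - cnj z) = (e*(cnj e - cnj z) + cnj z*(e - z)) / ((e - z) * (cnj e - cnj z))"
      using w0 cw0 by (simp add: add_frac_eq)
    have s4: "e*(cnj e - cnj z) + cnj z*(e - z) = 1 - z * cnj z" using ee by (simp add: algebra_simps)
    show ?thesis using s2 s3 s4 zz by simp
  qed
  finally show ?thesis using b by simp
qed

lemma circ_integral:
  assumes "(g has_contour_integral I) (circlepath 0 1)"
  shows "((\<lambda>t. g (cis t) * \<i> * cis t) has_integral I) {0..2*pi}"
  using assms unfolding circlepath_def
  by (subst (asm) has_contour_integral_part_circlepath_iff) auto

lemma dist_cis_pos: "cmod z < 1 \<Longrightarrow> cmod (cis t - z) > 0"
  by (metis norm_cis order_less_irrefl right_minus_eq zero_less_norm_iff)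

lemma aux_eq: "(e::complex) \<noteq> 0 \<Longrightarrow> F/(e - z) * \<i> * e + (e*F*w/(1 - w*e))/(e - 0) * \<i> * e = \<i> * F * (e/(e-z) + w*e/(1-w*e))"
  by (simp add: distrib_left mult_ac)

lemma aux_eq2: "(Z::complex) \<noteq> 0 \<Longrightarrow> Kc = S/Z \<Longrightarrow> X = \<i>*F*S \<Longrightarrow> (1/(\<i>*Z)) * X = Kc*F"
  by (simp add: field_simps)

lemma aux_eq3: "(Z::complex) \<noteq> 0 \<Longrightarrow> (1/(\<i>*Z)) * (2*P*\<i>*F) = (2*P/Z)*F"
  by (simp add: field_simps)

lemma sq_lt1: "cmod z < 1 \<Longrightarrow> (cmod z)^2 < 1"
  using power_strict_mono[of "cmod z" 1 2] by simp

lemma poisson: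
  fixes f :: "complex \<Rightarrow> complex" and z :: complex
  assumes hol: "f holomorphic_on ball 0 1" and cont: "continuous_on (cball 0 1) f" and z: "cmod z < 1"
  shows "(LINT t:{0..2*pi}|lborel. complex_of_real (1 / (cmod (cis t - z))^2) * f (cis t))
           = complex_of_real (2*pi / (1 - (cmod z)^2)) * f z"
proof -
  have h1: "((\<lambda>t. f (cis t) / (cis t - z) * \<i> * cis t) has_integral (2 * of_real pi * \<i> * f z)) {0..2*pi}"
    using circ_integral[OF Cauchy_integral_circlepath[OF cont hol]] z by simp
  define h where "h u = u * f u * cnj z / (1 - cnj z * u)" for u
  have nz: "1 - cnj z * u \<noteq> 0" if "cmod u \<le> 1" for u
  proof
    assume "1 - cnj z * u = 0"
    hence "cmod (cnj z * u) = 1" by (metis eq_iff_diff_eq_0 norm_one)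
    moreover have "cmod (cnj z * u) < 1"
      using z that by (simp add: norm_mult) (metis mult_le_one norm_ge_zero less_le_trans mult_strict_right_mono
          mult_less_cancel_left1 not_less order_le_less_trans)
    ultimately show False by simp
  qed
  have hol_h: "h holomorphic_on ball 0 1"
    unfolding h_def using nz by (intro holomorphic_intros hol) auto
  have cont_h: "continuous_on (cball 0 1) h"
    unfolding h_def using nz by (intro continuous_intros cont) auto
  have h2: "((\<lambda>t. h (cis t) / (cis t - 0) * \<i> * cis t) has_integral 0) {0..2*pi}"
    using circ_integral[OF Cauchy_integral_circlepath[OF cont_h hol_h, of 0]] by (simp add: h_def)
  have "((\<lambda>t. f (cis t) / (cis t - z) * \<i> * cis t + h (cis t) / (cis t - 0) * \<i> * cis t)
          has_integral (2 * of_real pi * \<i> * f z)) {0..2*pi}"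
    using has_integral_add[OF h1 h2] by simp
  hence h3: "((\<lambda>t. (1 / (\<i> * complex_of_real (1 - (cmod z)^2))) * (f (cis t) / (cis t - z) * \<i> * cis t + h (cis t) / (cis t - 0) * \<i> * cis t))
          has_integral ((1 / (\<i> * complex_of_real (1 - (cmod z)^2))) * (2 * of_real pi * \<i> * f z))) {0..2*pi}"
    by (rule has_integral_mult_right)
  have zz: "complex_of_real (1 - (cmod z)^2) \<noteq> 0"
  proof -
    have "1 - (cmod z)^2 \<noteq> 0" using sq_lt1[OF z] by simp
    thus ?thesis by (metis of_real_eq_0_iff)
  qed
  have eq: "(1 / (\<i> * complex_of_real (1 - (cmod z)^2))) * (f (cis t) / (cis t - z) * \<i> * cis t + h (cis t) / (cis t - 0) * \<i> * cis t)
      = complex_of_real (1 / (cmod (cis t - z))^2) * f (cis t)" for t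
  proof -
    have c0: "cis t \<noteq> 0" by simp
    have "complex_of_real (1 / (cmod (cis t - z))^2) =
         (cis t / (cis t - z) + cnj z * cis t / (1 - cnj z * cis t)) / complex_of_real (1 - (cmod z)^2)"
      by (rule kernel_identity) (use z in auto)
    moreover have "f (cis t) / (cis t - z) * \<i> * cis t + h (cis t) / (cis t - 0) * \<i> * cis t
        = \<i> * f (cis t) * (cis t / (cis t - z) + cnj z * cis t / (1 - cnj z * cis t))"
    proof -
      have "cis t - z \<noteq> 0" using dist_cis_pos[OF z, of t] by auto
      moreover have "1 - cnj z * cis t \<noteq> 0" using nz[of "cis t"] by simp
      show ?thesis using aux_eq[OF c0, of "f (cis t)" z "cnj z"] by (simp add: h_def mult_ac)
    qed
    ultimately show ?thesis using aux_eq2[OF zz] by metis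
  qed
  have HI: "((\<lambda>t. complex_of_real (1 / (cmod (cis t - z))^2) * f (cis t)) has_integral
          complex_of_real (2*pi / (1 - (cmod z)^2)) * f z) {0..2*pi}"
  proof -
    have "(1 / (\<i> * complex_of_real (1 - (cmod z)^2))) * (2 * of_real pi * \<i> * f z)
        = (2 * of_real pi / complex_of_real (1 - (cmod z)^2)) * f z"
      by (rule aux_eq3[OF zz])
    also have "\<dots> = complex_of_real (2*pi / (1 - (cmod z)^2)) * f z" by simp
    finally show ?thesis using h3 unfolding eq by (simp add: mult.assoc)
  qed
  have SI: "set_integrable lborel {0..2*pi} (\<lambda>t. complex_of_real (1 / (cmod (cis t - z))^2) * f (cis t))"
    unfolding set_integrable_def
  proof (rule borel_integrable_compact)
    show "continuous_on {0..2*pi} (\<lambda>t. complex_of_real (1 / (cmod (cis t - z))^2) * f (cis t))"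
      using dist_cis_pos[OF z]
      by (intro continuous_intros continuous_on_compose2[OF cont]) (auto simp: less_imp_le)
  qed auto
  show ?thesis
    unfolding set_borel_integral_eq_integral(2)[OF SI] by (rule integral_unique[OF HI])
qed

lemma fubini_sq:
  fixes g :: "real \<times> real \<Rightarrow> complex"
  assumes meas: "g \<in> borel_measurable lborel"
    and bnd: "\<And>x y. x \<in> {a..b} \<Longrightarrow> y \<in> {a..b} \<Longrightarrow> norm (g (x,y)) \<le> M"
  shows "set_integrable lborel ({a..b} \<times> {a..b}) g"
    and "(LINT t:{a..b}\<times>{a..b}|lborel. g t) = (LINT x:{a..b}|lborel. (LINT y:{a..b}|lborel. g (x,y)))"
    and "(LINT t:{a..b}\<times>{a..b}|lborel. g t) = (LINT y:{a..b}|lborel. (LINT x:{a..b}|lborel. g (x,y)))"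
proof -
  define A where "A = {a..b::real}"
  define F where "F t = indicator (A \<times> A) t *\<^sub>R g t" for t
  have meas': "g \<in> borel_measurable (lborel \<Otimes>\<^sub>M lborel)" using meas by (simp add: lborel_prod)
  have int: "integrable lborel F"
    unfolding F_def
  proof (rule integrableI_bounded_set_indicator[where B=M])
    show "emeasure lborel (A \<times> A) < \<infinity>"
      by (rule emeasure_bounded_finite) (simp add: A_def bounded_Times)
    show "AE x in lborel. x \<in> A \<times> A \<longrightarrow> norm (g x) \<le> M"
      using bnd by (auto simp: A_def)
    show "A \<times> A \<in> sets lborel" unfolding A_def
      by (simp add: borel_closed closed_Times)
  qed (use meas in auto)
  thus SI: "set_integrable lborel ({a..b} \<times> {a..b}) g"
    unfolding set_integrable_def F_def A_def .
  have int2: "integrable (lborel \<Otimes>\<^sub>M lborel) F" using int by (simp add: lborel_prod)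
  have Fxy: "F (x,y) = indicator A x *\<^sub>R (indicator A y *\<^sub>R g (x,y))" for x y
    by (simp add: F_def indicator_times)
  have "(LINT t:A\<times>A|lborel. g t) = integral\<^sup>L (lborel \<Otimes>\<^sub>M lborel) F"
    unfolding set_lebesgue_integral_def F_def by (simp add: lborel_prod)
  also have "\<dots> = (\<integral>x. (\<integral>y. F (x,y) \<partial>lborel) \<partial>lborel)"
    by (rule lborel_pair.integral_fst'[OF int2, symmetric])
  also have "\<dots> = (LINT x:A|lborel. (LINT y:A|lborel. g (x,y)))"
    unfolding set_lebesgue_integral_def Fxy integral_scaleR_right ..
  finally show "(LINT t:{a..b}\<times>{a..b}|lborel. g t) = (LINT x:{a..b}|lborel. (LINT y:{a..b}|lborel. g (x,y)))"
    unfolding A_def .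
  have int3: "integrable (lborel \<Otimes>\<^sub>M lborel) (case_prod (\<lambda>x y. F (x,y)))" using int2 by simp
  have Fyx: "F (x,y) = indicator A y *\<^sub>R (indicator A x *\<^sub>R g (x,y))" for x y
    by (simp add: F_def indicator_times)
  have "(LINT t:A\<times>A|lborel. g t) = integral\<^sup>L (lborel \<Otimes>\<^sub>M lborel) (case_prod (\<lambda>x y. F (x,y)))"
    unfolding set_lebesgue_integral_def case_prod_eta unfolding F_def by (simp add: lborel_prod)
  also have "\<dots> = (\<integral>y. (\<integral>x. F (x,y) \<partial>lborel) \<partial>lborel)"
    by (rule lborel_pair.integral_snd[OF int3, symmetric])
  also have "\<dots> = (LINT y:A|lborel. (LINT x:A|lborel. g (x,y)))"
    unfolding set_lebesgue_integral_def Fyx integral_scaleR_right ..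
  finally show "(LINT t:{a..b}\<times>{a..b}|lborel. g t) = (LINT y:{a..b}|lborel. (LINT x:{a..b}|lborel. g (x,y)))"
    unfolding A_def .
qed

lemma prod_sq:
  fixes u v :: "real \<Rightarrow> complex"
  assumes mu: "u \<in> borel_measurable lborel" and mv: "v \<in> borel_measurable lborel"
    and bu: "\<And>x. x \<in> {a..b} \<Longrightarrow> norm (u x) \<le> Mu" and bv: "\<And>x. x \<in> {a..b} \<Longrightarrow> norm (v x) \<le> Mv"
  shows "(LINT t:{a..b}\<times>{a..b}|lborel. u (fst t) * v (snd t)) = (LINT x:{a..b}|lborel. u x) * (LINT y:{a..b}|lborel. v y)"
proof -
  have m: "(\<lambda>t. u (fst t) * v (snd t)) \<in> borel_measurable lborel"
    using mu mv by (simp add: borel_prod[symmetric] lborel_prod[symmetric])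
  have b: "norm (u x * v y) \<le> Mu * Mv" if "x \<in> {a..b}" "y \<in> {a..b}" for x y
    using bu[OF that(1)] bv[OF that(2)] by (simp add: norm_mult mult_mono' order_trans[OF norm_ge_zero])
  have "(LINT t:{a..b}\<times>{a..b}|lborel. u (fst t) * v (snd t)) = (LINT x:{a..b}|lborel. (LINT y:{a..b}|lborel. u x * v y))"
    using fubini_sq(2)[OF m, of a b "Mu*Mv"] b by simp
  also have "\<dots> = (LINT x:{a..b}|lborel. u x * (LINT y:{a..b}|lborel. v y))"
    by (simp add: set_lebesgue_integral_def)
  also have "\<dots> = (LINT x:{a..b}|lborel. u x) * (LINT y:{a..b}|lborel. v y)"
    by (simp add: set_lebesgue_integral_def)
  finally show ?thesis .
qed


lemma infinite_T: "infinite {x::complex. cmod x = 1}"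
proof -
  have S: "{x::complex. cmod x = 1} = sphere 0 1" by (auto simp: sphere_def dist_norm)
  have "connected (sphere (0::complex) 1)" by (simp add: connected_sphere_eq)
  hence "uncountable (sphere (0::complex) 1)"
    by (rule connected_uncountable[of _ 1 "-1"]) auto
  thus ?thesis unfolding S using countable_finite by blast
qed

lemma eval2_tendsto:
  "(f \<longlongrightarrow> x) F \<Longrightarrow> (g \<longlongrightarrow> y) F \<Longrightarrow> ((\<lambda>r. eval2 d M N (f r) (g r)) \<longlongrightarrow> eval2 d M N x y) F"
  unfolding eval2_def by (intro tendsto_intros)

lemma eval2_cont:
  "continuous_on S f \<Longrightarrow> continuous_on S g \<Longrightarrow> continuous_on S (\<lambda>r. eval2 d M N (f r) (g r))"
  unfolding eval2_def by (intro continuous_intros)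

lemma eval2_holo1: "(\<lambda>w. eval2 d M N w e) holomorphic_on S"
  unfolding eval2_def by (intro holomorphic_intros)

lemma eval2_holo2: "(\<lambda>w. eval2 d M N e w) holomorphic_on S"
  unfolding eval2_def by (intro holomorphic_intros)

lemma eval2_poly1: "eval2 d M N w e = poly (map_poly (\<lambda>a. poly a e) (P2 d M N)) w"
  using ev_map[of "P2 d M N" w e] ev_P2[of d M N w e] by simp

lemma not_all_zero:
  assumes bideg: "has_bidegree c m n" and ator: "atoral c m n" and e: "cmod e = 1"
  shows "\<exists>w. eval2 c m n w e \<noteq> 0"
proof (rule ccontr)
  assume "\<not> (\<exists>w. eval2 c m n w e \<noteq> 0)"
  hence z: "\<And>w. eval2 c m n w e = 0" by blast
  have "(\<lambda>x. (x,e)) ` {x. cmod x = 1} \<subseteq> {(x,y). cmod x = 1 \<and> cmod y = 1 \<and> eval2 c m n x y = 0}"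
    using z e by auto
  hence "finite ((\<lambda>x. (x,e)) ` {x::complex. cmod x = 1})"
    using torus_zeros_finite[OF bideg ator] finite_subset by blast
  hence "finite {x::complex. cmod x = 1}"
    by (rule finite_imageD) (auto simp: inj_on_def)
  thus False using infinite_T by blast
qed

lemma hurwitz_gen:
  fixes d :: "nat \<Rightarrow> nat \<Rightarrow> complex"
  assumes nz: "\<And>w1 w2. cmod w1 < 1 \<Longrightarrow> cmod w2 < 1 \<Longrightarrow> eval2 d M N w1 w2 \<noteq> 0"
    and e: "cmod e = 1" and ex: "\<exists>w. eval2 d M N w e \<noteq> 0" and w0: "cmod w0 < 1"
  shows "eval2 d M N w0 e \<noteq> 0"
proof -
  define G where "G = map_poly (\<lambda>a. poly a e) (P2 d M N)"
  have gG: "eval2 d M N w e = poly G w" for w unfolding G_def by (rule eval2_poly1)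
  define g where "g w = eval2 d M N w e" for w
  show ?thesis
  proof (cases "g constant_on ball 0 1")
    case True
    then obtain k0 where k0: "\<And>w. w \<in> ball 0 1 \<Longrightarrow> g w = k0" unfolding constant_on_def by blast
    show ?thesis
    proof (cases "k0 = 0")
      case False
      thus ?thesis using k0[of w0] w0 by (simp add: g_def)
    next
      case True
      have "ball 0 1 \<subseteq> {w. poly G w = 0}" using k0 True by (auto simp: g_def gG)
      moreover have "infinite (ball (0::complex) 1)" using uncountable_ball[of 1 0] countable_finite by auto
      ultimately have "infinite {w. poly G w = 0}" using finite_subset by blast
      hence "G = 0" using poly_roots_finite by blast
      thus ?thesis using ex by (simp add: gG)
    qed
  next
    case nonconst: False
    define s where "s k = 1 - inverse (real (Suc (Suc k)))" for k
    have s01: "0 < s k" "s k < 1" for k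
      unfolding s_def by (auto simp: field_simps)
    have slim: "s \<longlonglongrightarrow> 1"
    proof -
      have "(\<lambda>k. inverse (real (Suc (Suc k)))) \<longlonglongrightarrow> 0"
        using LIMSEQ_Suc[OF LIMSEQ_inverse_real_of_nat] .
      from tendsto_diff[OF tendsto_const[of 1] this] show ?thesis unfolding s_def by simp
    qed
    define F where "F k w = eval2 d M N w (of_real (s k) * e)" for k w
    define Bd where "Bd k = (\<Sum>i\<le>M. \<Sum>j\<le>N. cmod (d i j) * cmod ((of_real (s k))^j - (1::complex)))" for k
    have Bd0: "Bd \<longlonglongrightarrow> 0"
    proof -
      have "Bd \<longlonglongrightarrow> (\<Sum>i\<le>M. \<Sum>j\<le>N. cmod (d i j) * cmod ((of_real 1)^j - (1::complex)))"
        unfolding Bd_def by (intro tendsto_intros slim)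
      thus ?thesis by simp
    qed
    have bound: "cmod (F k w - g w) \<le> Bd k" if w: "cmod w \<le> 1" for k w
    proof -
      have "F k w - g w = (\<Sum>i\<le>M. \<Sum>j\<le>N. d i j * w^i * e^j * ((of_real (s k))^j - 1))"
        unfolding F_def g_def eval2_def
        by (simp add: sum_subtractf[symmetric] power_mult_distrib algebra_simps)
      also have "cmod \<dots> \<le> (\<Sum>i\<le>M. \<Sum>j\<le>N. cmod (d i j * w^i * e^j * ((of_real (s k))^j - 1)))"
        by (rule order_trans[OF norm_sum sum_mono[OF norm_sum]])
      also have "\<dots> \<le> Bd k"
        unfolding Bd_def
      proof (intro sum_mono)
        fix i j
        have "cmod w ^ i \<le> 1" using w by (simp add: power_le_one)
        thus "cmod (d i j * w^i * e^j * ((of_real (s k))^j - 1)) \<le> cmod (d i j) * cmod ((of_real (s k))^j - (1::complex))"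
        proof -
          have "cmod (d i j) * cmod w ^ i * cmod ((of_real (s k))^j - (1::complex)) \<le> cmod (d i j) * 1 * cmod ((of_real (s k))^j - (1::complex))"
            using \<open>cmod w ^ i \<le> 1\<close> by (intro mult_right_mono mult_left_mono) auto
          thus ?thesis using e by (simp add: norm_mult norm_power)
        qed
      qed
      finally show ?thesis .
    qed
    have ul: "uniform_limit K F g sequentially" if "compact K" "K \<subseteq> ball 0 1" for K
    proof (rule uniform_limitI)
      fix \<epsilon> :: real assume "\<epsilon> > 0"
      hence "eventually (\<lambda>k. Bd k < \<epsilon>) sequentially" using order_tendstoD(2)[OF Bd0] by blast
      thus "\<forall>\<^sub>F k in sequentially. \<forall>x\<in>K. dist (F k x) (g x) < \<epsilon>"
      proof (rule eventually_mono)
        fix k assume "Bd k < \<epsilon>"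
        show "\<forall>x\<in>K. dist (F k x) (g x) < \<epsilon>"
        proof
          fix x assume "x \<in> K"
          hence "cmod x \<le> 1" using that(2) by auto
          thus "dist (F k x) (g x) < \<epsilon>" using bound[of x k] \<open>Bd k < \<epsilon>\<close> by (simp add: dist_norm)
        qed
      qed
    qed
    have "g w0 \<noteq> 0"
    proof (rule Hurwitz_no_zeros[of "ball 0 1" F g])
      show "\<And>k. F k holomorphic_on ball 0 1" unfolding F_def by (rule eval2_holo1)
      show "g holomorphic_on ball 0 1" unfolding g_def by (rule eval2_holo1)
      show "\<And>k z. z \<in> ball 0 1 \<Longrightarrow> F k z \<noteq> 0"
        unfolding F_def using s01 e by (intro nz) (auto simp: norm_mult abs_of_pos)
    qed (use ul nonconst w0 in auto)
    thus ?thesis by (simp add: g_def)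
  qed
qed

lemma bval_lim:
  assumes "((\<lambda>r. f (if norm a < 1 then a else complex_of_real r * a)
             (if norm b < 1 then b else complex_of_real r * b)) \<longlongrightarrow> L) (at_left (1::real))"
  shows "bval f a b = L"
  unfolding bval_def by (rule tendsto_Lim[OF trivial_limit_at_left_real assms])

lemma radial_tendsto: "((\<lambda>r. if norm a < 1 then a else complex_of_real r * a) \<longlongrightarrow> a) (at_left (1::real))"
proof (cases "norm a < 1")
  case False
  have "((\<lambda>r. complex_of_real r * a) \<longlongrightarrow> complex_of_real 1 * a) (at_left (1::real))"
    by (intro tendsto_intros)
  thus ?thesis using False by simp
qed simp

lemma cis_preimage_countable: "countable {t::real. cis t = e}"
proof (cases "\<exists>t0. cis t0 = e")
  case True
  then obtain t0 where t0: "cis t0 = e" by blast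
  have "{t::real. cis t = e} \<subseteq> range (\<lambda>k::int. t0 + 2 * pi * of_int k)"
  proof
    fix t assume "t \<in> {t::real. cis t = e}"
    hence "exp (\<i> * complex_of_real t) = exp (\<i> * complex_of_real t0)" using t0 by (simp add: cis_conv_exp)
    then obtain k :: int where k: "\<i> * complex_of_real t = \<i> * complex_of_real t0 + of_int (2 * k) * pi * \<i>"
      unfolding exp_eq by blast
    hence "Im (\<i> * complex_of_real t) = Im (\<i> * complex_of_real t0 + of_int (2 * k) * pi * \<i>)" by simp
    hence "t = t0 + 2 * pi * of_int k" by simp
    thus "t \<in> range (\<lambda>k::int. t0 + 2 * pi * of_int k)" by blast
  qed
  thus ?thesis by (rule countable_subset) simp
next
  case False
  hence "{t::real. cis t = e} = {}" by blast
  thus ?thesis by simp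
qed

lemma countable_pre1: "finite W \<Longrightarrow> countable {t::real. cis t \<in> W}"
proof -
  assume "finite W"
  have "{t::real. cis t \<in> W} = (\<Union>w\<in>W. {t. cis t = w})" by auto
  thus ?thesis using \<open>finite W\<close> cis_preimage_countable by (simp add: countable_finite)
qed

lemma countable_pre2: "finite Z \<Longrightarrow> countable {t::real\<times>real. (cis (fst t), cis (snd t)) \<in> Z}"
proof -
  assume "finite Z"
  have "{t::real\<times>real. (cis (fst t), cis (snd t)) \<in> Z} = (\<Union>z\<in>Z. {t. cis t = fst z} \<times> {t. cis t = snd z})" by auto
  thus ?thesis using \<open>finite Z\<close> cis_preimage_countable by (simp add: countable_finite)
qed

locale rif =
  fixes c :: "nat \<Rightarrow> nat \<Rightarrow> complex" and m n :: nat
  assumes bideg: "has_bidegree c m n"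
    and nozeros: "\<forall>w1 w2. norm w1 < 1 \<longrightarrow> norm w2 < 1 \<longrightarrow> eval2 c m n w1 w2 \<noteq> 0"
    and ator: "atoral c m n"
begin

abbreviation "p \<equiv> eval2 c m n"
abbreviation "pt \<equiv> eval2 (refl2 c m n) m n"
definition phi where "phi w1 w2 = pt w1 w2 / p w1 w2"

definition "Z = {(x,y). cmod x = 1 \<and> cmod y = 1 \<and> p x y = 0}"

lemma Z_finite: "finite Z"
  unfolding Z_def by (rule torus_zeros_finite[OF bideg ator])

lemma hz1: "cmod e = 1 \<Longrightarrow> cmod w < 1 \<Longrightarrow> p w e \<noteq> 0"
  by (rule hurwitz_gen[OF _ _ not_all_zero[OF bideg ator]]) (use nozeros in auto)

lemma hz2: "cmod e = 1 \<Longrightarrow> cmod w < 1 \<Longrightarrow> p e w \<noteq> 0"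
proof -
  assume e: "cmod e = 1" and w: "cmod w < 1"
  have "eval2 (ctr c) n m w e \<noteq> 0"
    by (rule hurwitz_gen[OF _ e not_all_zero[OF has_bidegree_ctr[OF bideg] atoral_ctr[OF ator] e] w])
       (use nozeros in \<open>auto simp: eval2_ctr\<close>)
  thus ?thesis by (simp add: eval2_ctr)
qed

lemma pnz_2: "cmod z < 1 \<Longrightarrow> cmod w \<le> 1 \<Longrightarrow> p z w \<noteq> 0"
  using nozeros hz1 by (cases "cmod w < 1") auto

lemma pnz_1: "cmod z < 1 \<Longrightarrow> cmod w \<le> 1 \<Longrightarrow> p w z \<noteq> 0"
  using nozeros hz2 by (cases "cmod w < 1") auto

lemma pnz_good1: "cmod e = 1 \<Longrightarrow> (\<forall>x. cmod x = 1 \<longrightarrow> p x e \<noteq> 0) \<Longrightarrow> cmod w \<le> 1 \<Longrightarrow> p w e \<noteq> 0"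
  using hz1 by (cases "cmod w < 1") auto

lemma pnz_good2: "cmod e = 1 \<Longrightarrow> (\<forall>y. cmod y = 1 \<longrightarrow> p e y \<noteq> 0) \<Longrightarrow> cmod w \<le> 1 \<Longrightarrow> p e w \<noteq> 0"
  using hz2 by (cases "cmod w < 1") auto

lemma phi_bound: "cmod x = 1 \<Longrightarrow> cmod y = 1 \<Longrightarrow> cmod (phi x y) \<le> 1"
  unfolding phi_def using refl_torus[of x y c m n] by (simp add: norm_mult norm_power norm_divide divide_le_eq_1)

lemma phi_unimod: "cmod x = 1 \<Longrightarrow> cmod y = 1 \<Longrightarrow> p x y \<noteq> 0 \<Longrightarrow> cmod (phi x y) = 1"
  unfolding phi_def using refl_torus[of x y c m n] by (simp add: norm_mult norm_power norm_divide)

lemma bval_phi: "p a b \<noteq> 0 \<Longrightarrow> bval phi a b = phi a b"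
  unfolding phi_def
  by (rule bval_lim, intro tendsto_divide eval2_tendsto radial_tendsto)

lemma phi_holo1: "(\<And>w. w \<in> S \<Longrightarrow> p w e \<noteq> 0) \<Longrightarrow> (\<lambda>w. phi w e) holomorphic_on S"
  unfolding phi_def by (intro holomorphic_intros eval2_holo1)

lemma phi_holo2: "(\<And>w. w \<in> S \<Longrightarrow> p e w \<noteq> 0) \<Longrightarrow> (\<lambda>w. phi e w) holomorphic_on S"
  unfolding phi_def by (intro holomorphic_intros eval2_holo2)

lemma phi_cont: "continuous_on S f \<Longrightarrow> continuous_on S g \<Longrightarrow> (\<And>t. t \<in> S \<Longrightarrow> p (f t) (g t) \<noteq> 0)
   \<Longrightarrow> continuous_on S (\<lambda>t. phi (f t) (g t))"
  unfolding phi_def by (intro continuous_intros eval2_cont) auto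

lemma poisson2:
  assumes z: "cmod z < 1" and z2: "cmod z2 < 1"
  shows "(LINT t:{0..2*pi}|lborel. complex_of_real (1 / (cmod (cis t - z2))^2) * phi z (cis t))
           = complex_of_real (2*pi / (1 - (cmod z2)^2)) * phi z z2"
proof (rule poisson[OF _ _ z2])
  show "(\<lambda>w. phi z w) holomorphic_on ball 0 1" by (rule phi_holo2) (use pnz_2[OF z] in auto)
  show "continuous_on (cball 0 1) (\<lambda>w. phi z w)" by (rule phi_cont) (use pnz_2[OF z] in \<open>auto intro!: continuous_intros\<close>)
qed

lemma poisson1:
  assumes z: "cmod z < 1" and z1: "cmod z1 < 1"
  shows "(LINT t:{0..2*pi}|lborel. complex_of_real (1 / (cmod (cis t - z1))^2) * phi (cis t) z)
           = complex_of_real (2*pi / (1 - (cmod z1)^2)) * phi z1 z"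
proof (rule poisson[OF _ _ z1])
  show "(\<lambda>w. phi w z) holomorphic_on ball 0 1" by (rule phi_holo1) (use pnz_1[OF z] in auto)
  show "continuous_on (cball 0 1) (\<lambda>w. phi w z)" by (rule phi_cont) (use pnz_1[OF z] in \<open>auto intro!: continuous_intros\<close>)
qed

lemma poisson1_good:
  assumes e: "cmod e = 1" and g: "\<forall>x. cmod x = 1 \<longrightarrow> p x e \<noteq> 0" and z1: "cmod z1 < 1"
  shows "(LINT t:{0..2*pi}|lborel. complex_of_real (1 / (cmod (cis t - z1))^2) * phi (cis t) e)
           = complex_of_real (2*pi / (1 - (cmod z1)^2)) * phi z1 e"
proof (rule poisson[OF _ _ z1])
  show "(\<lambda>w. phi w e) holomorphic_on ball 0 1" by (rule phi_holo1) (use pnz_good1[OF e g] in auto)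
  show "continuous_on (cball 0 1) (\<lambda>w. phi w e)" by (rule phi_cont) (use pnz_good1[OF e g] in \<open>auto intro!: continuous_intros\<close>)
qed

lemma poisson2_good:
  assumes e: "cmod e = 1" and g: "\<forall>y. cmod y = 1 \<longrightarrow> p e y \<noteq> 0" and z2: "cmod z2 < 1"
  shows "(LINT t:{0..2*pi}|lborel. complex_of_real (1 / (cmod (cis t - z2))^2) * phi e (cis t))
           = complex_of_real (2*pi / (1 - (cmod z2)^2)) * phi e z2"
proof (rule poisson[OF _ _ z2])
  show "(\<lambda>w. phi e w) holomorphic_on ball 0 1" by (rule phi_holo2) (use pnz_good2[OF e g] in auto)
  show "continuous_on (cball 0 1) (\<lambda>w. phi e w)" by (rule phi_cont) (use pnz_good2[OF e g] in \<open>auto intro!: continuous_intros\<close>)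
qed

lemma meas_phi2: "(\<lambda>t::real\<times>real. phi (cis (fst t)) (cis (snd t))) \<in> borel_measurable borel"
  unfolding phi_def
  by (intro borel_measurable_divide borel_measurable_continuous_onI eval2_cont continuous_intros)

lemma meas_phi1: "(\<lambda>t::real. phi (cis t) z) \<in> borel_measurable borel"
  unfolding phi_def
  by (intro borel_measurable_divide borel_measurable_continuous_onI eval2_cont continuous_intros)

lemma meas_phi1': "(\<lambda>t::real. phi z (cis t)) \<in> borel_measurable borel"
  unfolding phi_def
  by (intro borel_measurable_divide borel_measurable_continuous_onI eval2_cont continuous_intros)

end


lemma borel_measurable_cnj'[measurable (raw)]:
  "f \<in> borel_measurable M \<Longrightarrow> (\<lambda>x. cnj (f x)) \<in> borel_measurable M"
  using measurable_compose[of f M borel cnj borel]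
  by (simp add: borel_measurable_continuous_onI continuous_on_cnj continuous_on_id)

lemma set_integral_cnj: "(LINT x:S|M. cnj (f x)) = cnj (LINT x:S|M. (f x :: complex))"
proof -
  have "(\<lambda>x. indicator S x *\<^sub>R cnj (f x)) = (\<lambda>x. cnj (indicator S x *\<^sub>R f x))"
    by (simp add: fun_eq_iff)
  thus ?thesis unfolding set_lebesgue_integral_def by (simp only: Bochner_Integration.integral_cnj)
qed

lemma ofr_aux: "complex_of_real (X/den - R/den) = complex_of_real (1/den) * (complex_of_real X - complex_of_real R)"
proof -
  have "X/den - R/den = (1/den) * (X - R)" by (simp add: diff_divide_distrib)
  thus ?thesis by simp
qed

lemma ptwise:
  fixes a b c d :: complex and den :: real
  assumes d: "cmod d = 1"
  defines "Q \<equiv> b*cnj b + c*cnj c - a*cnj b - a*cnj c + a*cnj d + b*cnj c - b*cnj d - c*cnj d"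
  shows "complex_of_real ((cmod (a - b - c + d))^2 / den - (1 - (cmod c)^2 - (cmod b)^2 + (cmod a)^2) / den)
     = complex_of_real (1/den) * Q + cnj (complex_of_real (1/den) * Q)"
proof -
  have dd: "d * cnj d = 1" using complex_norm_square[of d] d by simp
  have "complex_of_real ((cmod (a - b - c + d))^2 / den - (1 - (cmod c)^2 - (cmod b)^2 + (cmod a)^2) / den)
     = complex_of_real (1/den) * (complex_of_real ((cmod (a - b - c + d))^2) - (1 - complex_of_real ((cmod c)^2) - complex_of_real ((cmod b)^2) + complex_of_real ((cmod a)^2)))"
    unfolding ofr_aux by simp
  also have "\<dots> = complex_of_real (1/den) * ((a - b - c + d) * cnj (a - b - c + d) - (d * cnj d - c * cnj c - b * cnj b + a * cnj a))"
    unfolding complex_norm_square dd by simp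
  also have "\<dots> = complex_of_real (1/den) * (Q + cnj Q)"
    unfolding Q_def by (simp add: algebra_simps)
  also have "\<dots> = complex_of_real (1/den) * Q + cnj (complex_of_real (1/den) * Q)"
    by (simp add: algebra_simps add_divide_distrib)
  finally show ?thesis .
qed

lemma meas_swap: "(\<lambda>t::real\<times>real. (snd t, fst t)) \<in> borel_measurable borel"
  by (intro borel_measurable_continuous_onI continuous_intros)

lemma ind_snd_meas: "(\<lambda>t::real\<times>real. indicator {a..b} (snd t) :: real) \<in> borel_measurable borel"
proof -
  have "(\<lambda>t::real\<times>real. indicator {a..b} (snd t) :: real) = indicator (UNIV \<times> {a..b})"
    by (auto simp: fun_eq_iff indicator_def)
  moreover have "UNIV \<times> {a..b::real} \<in> sets (borel :: (real \<times> real) measure)"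
    by (intro borel_closed closed_Times) auto
  ultimately show ?thesis by (simp add: borel_measurable_indicator)
qed

lemma inner_meas_y:
  fixes g :: "real \<times> real \<Rightarrow> complex"
  assumes meas: "g \<in> borel_measurable borel"
  shows "(\<lambda>y. LINT x:{a..b}|lborel. g (x,y)) \<in> borel_measurable lborel"
  unfolding set_lebesgue_integral_def
proof (rule lborel.borel_measurable_lebesgue_integral)
  have "(\<lambda>t. g (snd t, fst t)) \<in> borel_measurable borel"
    using measurable_compose[OF meas_swap meas] by simp
  hence "(\<lambda>t::real\<times>real. indicator {a..b} (snd t) *\<^sub>R g (snd t, fst t)) \<in> borel_measurable borel"
    by (intro borel_measurable_scaleR ind_snd_meas)
  thus "(\<lambda>(y, x). indicator {a..b} x *\<^sub>R g (x, y)) \<in> borel_measurable (lborel \<Otimes>\<^sub>M lborel)"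
    by (simp add: lborel_prod case_prod_beta)
qed

lemma inner_meas_x:
  fixes g :: "real \<times> real \<Rightarrow> complex"
  assumes meas: "g \<in> borel_measurable borel"
  shows "(\<lambda>x. LINT y:{a..b}|lborel. g (x,y)) \<in> borel_measurable lborel"
  unfolding set_lebesgue_integral_def
proof (rule lborel.borel_measurable_lebesgue_integral)
  have "(\<lambda>t::real\<times>real. indicator {a..b} (snd t) *\<^sub>R g t) \<in> borel_measurable borel"
    using meas by (intro borel_measurable_scaleR ind_snd_meas)
  show "(\<lambda>(x, y). indicator {a..b} y *\<^sub>R g (x, y)) \<in> borel_measurable (lborel \<Otimes>\<^sub>M lborel)"
  proof -
    have "(\<lambda>(x, y). indicator {a..b} y *\<^sub>R g (x, y)) = (\<lambda>t::real\<times>real. indicator {a..b} (snd t) *\<^sub>R g t)"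
      by (auto simp: fun_eq_iff)
    thus ?thesis using \<open>(\<lambda>t::real\<times>real. indicator {a..b} (snd t) *\<^sub>R g t) \<in> borel_measurable borel\<close>
      by (simp add: lborel_prod)
  qed
qed

lemma fubini_ae_y:
  fixes g :: "real \<times> real \<Rightarrow> complex" and G :: "real \<Rightarrow> complex"
  assumes meas: "g \<in> borel_measurable borel"
    and bnd: "\<And>x y. x \<in> {a..b} \<Longrightarrow> y \<in> {a..b} \<Longrightarrow> norm (g (x,y)) \<le> M"
    and mG: "G \<in> borel_measurable borel" and X: "countable X"
    and eq: "\<And>y. y \<in> {a..b} \<Longrightarrow> y \<notin> X \<Longrightarrow> (LINT x:{a..b}|lborel. g (x,y)) = G y"
  shows "(LINT t:{a..b}\<times>{a..b}|lborel. g t) = (LINT y:{a..b}|lborel. G y)"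
proof -
  have "(LINT t:{a..b}\<times>{a..b}|lborel. g t) = (LINT y:{a..b}|lborel. (LINT x:{a..b}|lborel. g (x,y)))"
    using fubini_sq(3)[of g a b M] meas bnd by simp
  also have "\<dots> = (LINT y:{a..b}|lborel. G y)"
  proof (rule set_lebesgue_integral_cong_AE)
    show "(\<lambda>y. LINT x:{a..b}|lborel. g (x,y)) \<in> borel_measurable lborel" by (rule inner_meas_y[OF meas])
    show "AE y\<in>{a..b} in lborel. (LINT x:{a..b}|lborel. g (x,y)) = G y"
      using AE_not_in[OF countable_imp_null_set_lborel[OF X]] by eventually_elim (use eq in auto)
  qed (use mG in auto)
  finally show ?thesis .
qed

lemma fubini_ae_x:
  fixes g :: "real \<times> real \<Rightarrow> complex" and G :: "real \<Rightarrow> complex"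
  assumes meas: "g \<in> borel_measurable borel"
    and bnd: "\<And>x y. x \<in> {a..b} \<Longrightarrow> y \<in> {a..b} \<Longrightarrow> norm (g (x,y)) \<le> M"
    and mG: "G \<in> borel_measurable borel" and X: "countable X"
    and eq: "\<And>x. x \<in> {a..b} \<Longrightarrow> x \<notin> X \<Longrightarrow> (LINT y:{a..b}|lborel. g (x,y)) = G x"
  shows "(LINT t:{a..b}\<times>{a..b}|lborel. g t) = (LINT x:{a..b}|lborel. G x)"
proof -
  have "(LINT t:{a..b}\<times>{a..b}|lborel. g t) = (LINT x:{a..b}|lborel. (LINT y:{a..b}|lborel. g (x,y)))"
    using fubini_sq(2)[of g a b M] meas bnd by simp
  also have "\<dots> = (LINT x:{a..b}|lborel. G x)"
  proof (rule set_lebesgue_integral_cong_AE)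
    show "(\<lambda>x. LINT y:{a..b}|lborel. g (x,y)) \<in> borel_measurable lborel" by (rule inner_meas_x[OF meas])
    show "AE x\<in>{a..b} in lborel. (LINT y:{a..b}|lborel. g (x,y)) = G x"
      using AE_not_in[OF countable_imp_null_set_lborel[OF X]] by eventually_elim (use eq in auto)
  qed (use mG in auto)
  finally show ?thesis .
qed

lemma cont_bnd: "continuous_on {a..b::real} f \<Longrightarrow> \<exists>M. \<forall>x\<in>{a..b}. norm (f x :: complex) \<le> M"
  using compact_imp_bounded[OF compact_continuous_image[of "{a..b}" f]] by (auto simp: bounded_iff)

locale rifz = rif +
  fixes z1 z2 :: complex
  assumes z1: "cmod z1 < 1" and z2: "cmod z2 < 1"
begin

definition k1 where "k1 x = complex_of_real (1 / (cmod (cis x - z1))^2)"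
definition k2 where "k2 y = complex_of_real (1 / (cmod (cis y - z2))^2)"
definition "I1 = complex_of_real (2*pi / (1 - (cmod z1)^2))"
definition "I2 = complex_of_real (2*pi / (1 - (cmod z2)^2))"
definition "a = phi z1 z2"
definition "B y = phi z1 (cis y)"
definition "C x = phi (cis x) z2"
definition "D t = phi (cis (fst t)) (cis (snd t))"

lemma k1_cont: "continuous_on UNIV k1"
  unfolding k1_def using dist_cis_pos[OF z1] by (intro continuous_intros) auto
lemma k2_cont: "continuous_on UNIV k2"
  unfolding k2_def using dist_cis_pos[OF z2] by (intro continuous_intros) auto
lemma B_cont: "continuous_on UNIV B"
  unfolding B_def by (rule phi_cont) (use pnz_2[OF z1] in \<open>auto intro!: continuous_intros\<close>)
lemma C_cont: "continuous_on UNIV C"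
  unfolding C_def by (rule phi_cont) (use pnz_1[OF z2] in \<open>auto intro!: continuous_intros\<close>)

lemma cnj_k1[simp]: "cnj (k1 x) = k1 x" by (simp add: k1_def)
lemma cnj_k2[simp]: "cnj (k2 x) = k2 x" by (simp add: k2_def)
lemma cnj_I1[simp]: "cnj I1 = I1" by (simp add: I1_def)
lemma cnj_I2[simp]: "cnj I2 = I2" by (simp add: I2_def)

lemma m_k1[measurable]: "k1 \<in> borel_measurable borel" by (rule borel_measurable_continuous_onI[OF k1_cont])
lemma m_k2[measurable]: "k2 \<in> borel_measurable borel" by (rule borel_measurable_continuous_onI[OF k2_cont])
lemma m_B[measurable]: "B \<in> borel_measurable borel" by (rule borel_measurable_continuous_onI[OF B_cont])
lemma m_C[measurable]: "C \<in> borel_measurable borel" by (rule borel_measurable_continuous_onI[OF C_cont])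
lemma m_K1[measurable]: "(\<lambda>t::real\<times>real. k1 (fst t)) \<in> borel_measurable borel"
  by (rule borel_measurable_continuous_onI, rule continuous_on_compose2[OF k1_cont]) (auto intro: continuous_intros)
lemma m_K2[measurable]: "(\<lambda>t::real\<times>real. k2 (snd t)) \<in> borel_measurable borel"
  by (rule borel_measurable_continuous_onI, rule continuous_on_compose2[OF k2_cont]) (auto intro: continuous_intros)
lemma m_Bt[measurable]: "(\<lambda>t::real\<times>real. B (snd t)) \<in> borel_measurable borel"
  by (rule borel_measurable_continuous_onI, rule continuous_on_compose2[OF B_cont]) (auto intro: continuous_intros)
lemma m_Ct[measurable]: "(\<lambda>t::real\<times>real. C (fst t)) \<in> borel_measurable borel"
  by (rule borel_measurable_continuous_onI, rule continuous_on_compose2[OF C_cont]) (auto intro: continuous_intros)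
lemma m_D[measurable]: "D \<in> borel_measurable borel"
  unfolding D_def using meas_phi2 .

lemma D_bound: "cmod (D t) \<le> 1" unfolding D_def by (rule phi_bound) auto

definition bnd :: "(real \<times> real \<Rightarrow> complex) \<Rightarrow> bool" where
  "bnd g \<longleftrightarrow> (\<exists>M. \<forall>t\<in>{0..2*pi}\<times>{0..2*pi}. norm (g t) \<le> M)"

lemma bnd_mult: "bnd f \<Longrightarrow> bnd g \<Longrightarrow> bnd (\<lambda>t. f t * g t)"
proof -
  assume "bnd f" "bnd g"
  then obtain Mf Mg where f: "\<And>t. t \<in> {0..2*pi}\<times>{0..2*pi} \<Longrightarrow> norm (f t) \<le> Mf"
    and g: "\<And>t. t \<in> {0..2*pi}\<times>{0..2*pi} \<Longrightarrow> norm (g t) \<le> Mg" unfolding bnd_def by blast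
  have "norm (f t * g t) \<le> Mf * Mg" if "t \<in> {0..2*pi}\<times>{0..2*pi}" for t
    unfolding norm_mult by (rule mult_mono) (use f[OF that] g[OF that] in \<open>auto intro: order_trans[OF norm_ge_zero]\<close>)
  thus ?thesis unfolding bnd_def by blast
qed

lemma bnd_add: "bnd f \<Longrightarrow> bnd g \<Longrightarrow> bnd (\<lambda>t. f t + g t)"
proof -
  assume "bnd f" "bnd g"
  then obtain Mf Mg where f: "\<And>t. t \<in> {0..2*pi}\<times>{0..2*pi} \<Longrightarrow> norm (f t) \<le> Mf"
    and g: "\<And>t. t \<in> {0..2*pi}\<times>{0..2*pi} \<Longrightarrow> norm (g t) \<le> Mg" unfolding bnd_def by blast
  have "norm (f t + g t) \<le> Mf + Mg" if "t \<in> {0..2*pi}\<times>{0..2*pi}" for t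
    using norm_triangle_ineq[of "f t" "g t"] f[OF that] g[OF that] by linarith
  thus ?thesis unfolding bnd_def by blast
qed

lemma bnd_uminus: "bnd f \<Longrightarrow> bnd (\<lambda>t. - f t)"
  unfolding bnd_def by simp

lemma bnd_diff: "bnd f \<Longrightarrow> bnd g \<Longrightarrow> bnd (\<lambda>t. f t - g t)"
  using bnd_add[of f "\<lambda>t. - g t"] bnd_uminus[of g] by simp

lemma bnd_cnj: "bnd f \<Longrightarrow> bnd (\<lambda>t. cnj (f t))"
  unfolding bnd_def by simp

lemma bnd_const: "bnd (\<lambda>t. k)"
  unfolding bnd_def by blast

lemma bnd_fst: "continuous_on {0..2*pi} f \<Longrightarrow> bnd (\<lambda>t. f (fst t))"
  using cont_bnd[of 0 "2*pi" f] unfolding bnd_def by (auto simp: mem_Times_iff)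

lemma bnd_snd: "continuous_on {0..2*pi} f \<Longrightarrow> bnd (\<lambda>t. f (snd t))"
  using cont_bnd[of 0 "2*pi" f] unfolding bnd_def by (auto simp: mem_Times_iff)

lemma bnd_K1: "bnd (\<lambda>t. k1 (fst t))" by (rule bnd_fst, rule continuous_on_subset[OF k1_cont]) auto
lemma bnd_K2: "bnd (\<lambda>t. k2 (snd t))" by (rule bnd_snd, rule continuous_on_subset[OF k2_cont]) auto
lemma bnd_Bt: "bnd (\<lambda>t. B (snd t))" by (rule bnd_snd, rule continuous_on_subset[OF B_cont]) auto
lemma bnd_Ct: "bnd (\<lambda>t. C (fst t))" by (rule bnd_fst, rule continuous_on_subset[OF C_cont]) auto
lemma bnd_D: "bnd D" unfolding bnd_def using D_bound by blast

lemmas bnd_intros = bnd_mult bnd_add bnd_diff bnd_cnj bnd_const bnd_K1 bnd_K2 bnd_Bt bnd_Ct bnd_D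

lemma bnd_pt: "bnd g \<Longrightarrow> \<exists>M. \<forall>x y. x \<in> {0..2*pi} \<longrightarrow> y \<in> {0..2*pi} \<longrightarrow> norm (g (x,y)) \<le> M"
  unfolding bnd_def by (metis mem_Times_iff fst_conv snd_conv)

lemma bnd_int: "g \<in> borel_measurable borel \<Longrightarrow> bnd g \<Longrightarrow> set_integrable lborel ({0..2*pi}\<times>{0..2*pi}) g"
proof -
  assume m: "g \<in> borel_measurable borel" and "bnd g"
  then obtain M where "\<forall>x y. x \<in> {0..2*pi} \<longrightarrow> y \<in> {0..2*pi} \<longrightarrow> norm (g (x,y)) \<le> M"
    using bnd_pt by blast
  thus ?thesis using fubini_sq(1)[of g 0 "2*pi" M] m by simp
qed

end

context rifz
begin

lemma PB: "(LINT y:{0..2*pi}|lborel. k2 y * B y) = I2 * a"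
  using poisson2[OF z1 z2] unfolding k2_def B_def I2_def a_def .
lemma PC: "(LINT x:{0..2*pi}|lborel. k1 x * C x) = I1 * a"
  using poisson1[OF z2 z1] unfolding k1_def C_def I1_def a_def .
lemma P1: "(LINT x:{0..2*pi}|lborel. k1 x) = I1"
  using poisson[of "\<lambda>_. 1" z1] z1 unfolding k1_def I1_def by simp
lemma P2: "(LINT y:{0..2*pi}|lborel. k2 y) = I2"
  using poisson[of "\<lambda>_. 1" z2] z2 unfolding k2_def I2_def by simp

definition "Xb = {y::real. cis y \<in> snd ` Z}"
definition "Xc = {x::real. cis x \<in> fst ` Z}"
lemma Xb_count: "countable Xb" unfolding Xb_def by (rule countable_pre1) (simp add: Z_finite)
lemma Xc_count: "countable Xc" unfolding Xc_def by (rule countable_pre1) (simp add: Z_finite)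

lemma PDy: "y \<notin> Xb \<Longrightarrow> (LINT x:{0..2*pi}|lborel. k1 x * D (x,y)) = I1 * B y"
proof -
  assume y: "y \<notin> Xb"
  have g: "\<forall>x. cmod x = 1 \<longrightarrow> p x (cis y) \<noteq> 0"
  proof (intro allI impI notI)
    fix x assume "cmod x = 1" "p x (cis y) = 0"
    hence "(x, cis y) \<in> Z" by (simp add: Z_def)
    hence "y \<in> Xb" unfolding Xb_def by force
    thus False using y by simp
  qed
  show ?thesis using poisson1_good[OF _ g z1] unfolding k1_def D_def I1_def B_def by simp
qed

lemma PDx: "x \<notin> Xc \<Longrightarrow> (LINT y:{0..2*pi}|lborel. k2 y * D (x,y)) = I2 * C x"
proof -
  assume x: "x \<notin> Xc"
  have g: "\<forall>y. cmod y = 1 \<longrightarrow> p (cis x) y \<noteq> 0"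
  proof (intro allI impI notI)
    fix y assume "cmod y = 1" "p (cis x) y = 0"
    hence "(cis x, y) \<in> Z" by (simp add: Z_def)
    hence "x \<in> Xc" unfolding Xc_def by force
    thus False using x by simp
  qed
  show ?thesis using poisson2_good[OF _ g z2] unfolding k2_def D_def I2_def C_def by simp
qed

lemma prod_sq_c:
  fixes u v :: "real \<Rightarrow> complex"
  assumes u: "continuous_on UNIV u" and v: "continuous_on UNIV v"
  shows "(LINT t:{0..2*pi}\<times>{0..2*pi}|lborel. u (fst t) * v (snd t)) = (LINT x:{0..2*pi}|lborel. u x) * (LINT y:{0..2*pi}|lborel. v y)"
proof -
  obtain Mu where Mu: "\<forall>x\<in>{0..2*pi}. norm (u x) \<le> Mu" using cont_bnd[of 0 "2*pi" u] continuous_on_subset[OF u] by blast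
  obtain Mv where Mv: "\<forall>x\<in>{0..2*pi}. norm (v x) \<le> Mv" using cont_bnd[of 0 "2*pi" v] continuous_on_subset[OF v] by blast
  show ?thesis
    by (rule prod_sq[of u v 0 "2*pi" Mu Mv]) (use Mu Mv borel_measurable_continuous_onI[OF u] borel_measurable_continuous_onI[OF v] in auto)
qed

definition "beta = (LINT y:{0..2*pi}|lborel. k2 y * (B y * cnj (B y)))"
definition "gamma = (LINT x:{0..2*pi}|lborel. k1 x * (C x * cnj (C x)))"

lemma cB: "(LINT y:{0..2*pi}|lborel. k2 y * cnj (B y)) = cnj (I2 * a)"
proof -
  have "(LINT y:{0..2*pi}|lborel. k2 y * cnj (B y)) = (LINT y:{0..2*pi}|lborel. cnj (k2 y * B y))" by simp
  also have "\<dots> = cnj (I2 * a)" by (simp only: set_integral_cnj PB)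
  finally show ?thesis .
qed

lemma cC: "(LINT x:{0..2*pi}|lborel. k1 x * cnj (C x)) = cnj (I1 * a)"
proof -
  have "(LINT x:{0..2*pi}|lborel. k1 x * cnj (C x)) = (LINT x:{0..2*pi}|lborel. cnj (k1 x * C x))" by simp
  also have "\<dots> = cnj (I1 * a)" by (simp only: set_integral_cnj PC)
  finally show ?thesis .
qed

lemmas conts = k1_cont k2_cont B_cont C_cont

lemma J1: "(LINT t:{0..2*pi}\<times>{0..2*pi}|lborel. k1 (fst t) * (k2 (snd t) * (B (snd t) * cnj (B (snd t))))) = I1 * beta"
  unfolding beta_def P1[symmetric] by (rule prod_sq_c) (intro continuous_intros conts)+

lemma J2: "(LINT t:{0..2*pi}\<times>{0..2*pi}|lborel. (k1 (fst t) * (C (fst t) * cnj (C (fst t)))) * k2 (snd t)) = gamma * I2"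
  unfolding gamma_def P2[symmetric] by (rule prod_sq_c) (intro continuous_intros conts)+

lemma J3: "(LINT t:{0..2*pi}\<times>{0..2*pi}|lborel. (a * k1 (fst t)) * (k2 (snd t) * cnj (B (snd t)))) = (a * I1) * cnj (I2 * a)"
proof -
  have "(LINT t:{0..2*pi}\<times>{0..2*pi}|lborel. (a * k1 (fst t)) * (k2 (snd t) * cnj (B (snd t))))
     = (LINT x:{0..2*pi}|lborel. a * k1 x) * (LINT y:{0..2*pi}|lborel. k2 y * cnj (B y))"
    by (rule prod_sq_c) (intro continuous_intros conts)+
  thus ?thesis by (simp add: P1 cB)
qed

lemma J4: "(LINT t:{0..2*pi}\<times>{0..2*pi}|lborel. (a * (k1 (fst t) * cnj (C (fst t)))) * k2 (snd t)) = (a * cnj (I1 * a)) * I2"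
proof -
  have "(LINT t:{0..2*pi}\<times>{0..2*pi}|lborel. (a * (k1 (fst t) * cnj (C (fst t)))) * k2 (snd t))
     = (LINT x:{0..2*pi}|lborel. a * (k1 x * cnj (C x))) * (LINT y:{0..2*pi}|lborel. k2 y)"
    by (rule prod_sq_c) (intro continuous_intros conts)+
  thus ?thesis by (simp only: P2 cC set_integral_mult_right)
qed

lemma J5: "(LINT t:{0..2*pi}\<times>{0..2*pi}|lborel. (k1 (fst t) * cnj (C (fst t))) * (k2 (snd t) * B (snd t))) = cnj (I1 * a) * (I2 * a)"
proof -
  have "(LINT t:{0..2*pi}\<times>{0..2*pi}|lborel. (k1 (fst t) * cnj (C (fst t))) * (k2 (snd t) * B (snd t)))
     = (LINT x:{0..2*pi}|lborel. k1 x * cnj (C x)) * (LINT y:{0..2*pi}|lborel. k2 y * B y)"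
    by (rule prod_sq_c) (intro continuous_intros conts)+
  thus ?thesis by (simp only: PB cC)
qed

end

context rifz
begin

lemma J6: "(LINT t:{0..2*pi}\<times>{0..2*pi}|lborel. k1 (fst t) * k2 (snd t) * a * cnj (D t)) = (a * I1) * cnj (I2 * a)"
proof -
  have bd: "bnd (\<lambda>t. k1 (fst t) * k2 (snd t) * a * cnj (D t))" by (intro bnd_intros)
  obtain M where M: "\<forall>x y. x \<in> {0..2*pi} \<longrightarrow> y \<in> {0..2*pi} \<longrightarrow> norm (k1 (fst (x,y)) * k2 (snd (x,y)) * a * cnj (D (x,y))) \<le> M"
    using bnd_pt[OF bd] by blast
  have "(LINT t:{0..2*pi}\<times>{0..2*pi}|lborel. k1 (fst t) * k2 (snd t) * a * cnj (D t))
      = (LINT y:{0..2*pi}|lborel. (k2 y * a) * cnj (I1 * B y))"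
  proof (rule fubini_ae_y[OF _ _ _ Xb_count])
    show "(\<lambda>t. k1 (fst t) * k2 (snd t) * a * cnj (D t)) \<in> borel_measurable borel" by measurable
    show "(\<lambda>y. (k2 y * a) * cnj (I1 * B y)) \<in> borel_measurable borel" by measurable
    fix y assume y: "y \<notin> Xb"
    have "(LINT x:{0..2*pi}|lborel. k1 (fst (x,y)) * k2 (snd (x,y)) * a * cnj (D (x,y)))
        = (LINT x:{0..2*pi}|lborel. (k2 y * a) * cnj (k1 x * D (x,y)))" by (simp add: mult_ac)
    also have "\<dots> = (k2 y * a) * cnj (LINT x:{0..2*pi}|lborel. k1 x * D (x,y))"
      by (simp only: set_integral_mult_right set_integral_cnj)
    also have "\<dots> = (k2 y * a) * cnj (I1 * B y)" using PDy[OF y] by simp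
    finally show "(LINT x:{0..2*pi}|lborel. k1 (fst (x,y)) * k2 (snd (x,y)) * a * cnj (D (x,y))) = (k2 y * a) * cnj (I1 * B y)" .
  qed (use M in auto)
  also have "\<dots> = (LINT y:{0..2*pi}|lborel. (a * I1) * (k2 y * cnj (B y)))" by (simp add: mult_ac)
  also have "\<dots> = (a * I1) * cnj (I2 * a)" by (simp only: set_integral_mult_right cB)
  finally show ?thesis .
qed

lemma J7: "(LINT t:{0..2*pi}\<times>{0..2*pi}|lborel. k1 (fst t) * k2 (snd t) * B (snd t) * cnj (D t)) = I1 * beta"
proof -
  have bd: "bnd (\<lambda>t. k1 (fst t) * k2 (snd t) * B (snd t) * cnj (D t))" by (intro bnd_intros)
  obtain M where M: "\<forall>x y. x \<in> {0..2*pi} \<longrightarrow> y \<in> {0..2*pi} \<longrightarrow> norm (k1 (fst (x,y)) * k2 (snd (x,y)) * B (snd (x,y)) * cnj (D (x,y))) \<le> M"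
    using bnd_pt[OF bd] by blast
  have "(LINT t:{0..2*pi}\<times>{0..2*pi}|lborel. k1 (fst t) * k2 (snd t) * B (snd t) * cnj (D t))
      = (LINT y:{0..2*pi}|lborel. (k2 y * B y) * cnj (I1 * B y))"
  proof (rule fubini_ae_y[OF _ _ _ Xb_count])
    show "(\<lambda>t. k1 (fst t) * k2 (snd t) * B (snd t) * cnj (D t)) \<in> borel_measurable borel" by measurable
    show "(\<lambda>y. (k2 y * B y) * cnj (I1 * B y)) \<in> borel_measurable borel" by measurable
    fix y assume y: "y \<notin> Xb"
    have "(LINT x:{0..2*pi}|lborel. k1 (fst (x,y)) * k2 (snd (x,y)) * B (snd (x,y)) * cnj (D (x,y)))
        = (LINT x:{0..2*pi}|lborel. (k2 y * B y) * cnj (k1 x * D (x,y)))" by (simp add: mult_ac)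
    also have "\<dots> = (k2 y * B y) * cnj (LINT x:{0..2*pi}|lborel. k1 x * D (x,y))"
      by (simp only: set_integral_mult_right set_integral_cnj)
    also have "\<dots> = (k2 y * B y) * cnj (I1 * B y)" using PDy[OF y] by simp
    finally show "(LINT x:{0..2*pi}|lborel. k1 (fst (x,y)) * k2 (snd (x,y)) * B (snd (x,y)) * cnj (D (x,y))) = (k2 y * B y) * cnj (I1 * B y)" .
  qed (use M in auto)
  also have "\<dots> = (LINT y:{0..2*pi}|lborel. I1 * (k2 y * (B y * cnj (B y))))" by (simp add: mult_ac)
  also have "\<dots> = I1 * beta" unfolding beta_def by (simp only: set_integral_mult_right)
  finally show ?thesis .
qed

lemma J8: "(LINT t:{0..2*pi}\<times>{0..2*pi}|lborel. k1 (fst t) * k2 (snd t) * C (fst t) * cnj (D t)) = I2 * gamma"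
proof -
  have bd: "bnd (\<lambda>t. k1 (fst t) * k2 (snd t) * C (fst t) * cnj (D t))" by (intro bnd_intros)
  obtain M where M: "\<forall>x y. x \<in> {0..2*pi} \<longrightarrow> y \<in> {0..2*pi} \<longrightarrow> norm (k1 (fst (x,y)) * k2 (snd (x,y)) * C (fst (x,y)) * cnj (D (x,y))) \<le> M"
    using bnd_pt[OF bd] by blast
  have "(LINT t:{0..2*pi}\<times>{0..2*pi}|lborel. k1 (fst t) * k2 (snd t) * C (fst t) * cnj (D t))
      = (LINT x:{0..2*pi}|lborel. (k1 x * C x) * cnj (I2 * C x))"
  proof (rule fubini_ae_x[OF _ _ _ Xc_count])
    show "(\<lambda>t. k1 (fst t) * k2 (snd t) * C (fst t) * cnj (D t)) \<in> borel_measurable borel" by measurable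
    show "(\<lambda>x. (k1 x * C x) * cnj (I2 * C x)) \<in> borel_measurable borel" by measurable
    fix x assume x: "x \<notin> Xc"
    have "(LINT y:{0..2*pi}|lborel. k1 (fst (x,y)) * k2 (snd (x,y)) * C (fst (x,y)) * cnj (D (x,y)))
        = (LINT y:{0..2*pi}|lborel. (k1 x * C x) * cnj (k2 y * D (x,y)))" by (simp add: mult_ac)
    also have "\<dots> = (k1 x * C x) * cnj (LINT y:{0..2*pi}|lborel. k2 y * D (x,y))"
      by (simp only: set_integral_mult_right set_integral_cnj)
    also have "\<dots> = (k1 x * C x) * cnj (I2 * C x)" using PDx[OF x] by simp
    finally show "(LINT y:{0..2*pi}|lborel. k1 (fst (x,y)) * k2 (snd (x,y)) * C (fst (x,y)) * cnj (D (x,y))) = (k1 x * C x) * cnj (I2 * C x)" .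
  qed (use M in auto)
  also have "\<dots> = (LINT x:{0..2*pi}|lborel. I2 * (k1 x * (C x * cnj (C x))))" by (simp add: mult_ac)
  also have "\<dots> = I2 * gamma" unfolding gamma_def by (simp only: set_integral_mult_right)
  finally show ?thesis .
qed

end

context rifz
begin

definition "den t = (cmod (cis (fst t) - z1))^2 * (cmod (cis (snd t) - z2))^2"
definition "Lr t = (cmod (a - B (snd t) - C (fst t) + D t))^2 / den t"
definition "Rr t = (1 - (cmod (C (fst t)))^2 - (cmod (B (snd t)))^2 + (cmod a)^2) / den t"
definition "Q t = B (snd t) * cnj (B (snd t)) + C (fst t) * cnj (C (fst t)) - a * cnj (B (snd t)) - a * cnj (C (fst t))
   + a * cnj (D t) + B (snd t) * cnj (C (fst t)) - B (snd t) * cnj (D t) - C (fst t) * cnj (D t)"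
definition "Y t = k1 (fst t) * k2 (snd t) * Q t"
definition "LL t = k1 (fst t) * k2 (snd t) * ((a - B (snd t) - C (fst t) + D t) * cnj (a - B (snd t) - C (fst t) + D t))"
definition "RR t = k1 (fst t) * k2 (snd t) * (1 - C (fst t) * cnj (C (fst t)) - B (snd t) * cnj (B (snd t)) + a * cnj a)"

lemma kk: "complex_of_real (1 / den t) = k1 (fst t) * k2 (snd t)"
  unfolding den_def k1_def k2_def by simp

lemma LL_eq: "complex_of_real (Lr t) = LL t"
proof -
  have "complex_of_real (Lr t) = complex_of_real (1 / den t) * complex_of_real ((cmod (a - B (snd t) - C (fst t) + D t))^2)"
    unfolding Lr_def by simp
  thus ?thesis unfolding kk LL_def complex_norm_square .
qed

lemma RR_eq: "complex_of_real (Rr t) = RR t"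
proof -
  have "complex_of_real (Rr t) = complex_of_real (1 / den t) *
      (1 - complex_of_real ((cmod (C (fst t)))^2) - complex_of_real ((cmod (B (snd t)))^2) + complex_of_real ((cmod a)^2))"
    unfolding Rr_def by simp
  thus ?thesis unfolding kk RR_def complex_norm_square .
qed

definition "Xd = {t::real\<times>real. (cis (fst t), cis (snd t)) \<in> Z}"
lemma Xd_count: "countable Xd" unfolding Xd_def by (rule countable_pre2[OF Z_finite])

lemma D_unimod: "t \<notin> Xd \<Longrightarrow> cmod (D t) = 1"
  unfolding D_def Xd_def Z_def by (intro phi_unimod) auto

lemma LR_Y: "t \<notin> Xd \<Longrightarrow> LL t - RR t = Y t + cnj (Y t)"
proof -
  assume t: "t \<notin> Xd"
  have "LL t - RR t = complex_of_real (Lr t - Rr t)" by (simp add: LL_eq RR_eq)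
  also have "\<dots> = complex_of_real (1 / den t) * Q t + cnj (complex_of_real (1 / den t) * Q t)"
    unfolding Lr_def Rr_def Q_def by (rule ptwise[OF D_unimod[OF t]])
  also have "\<dots> = Y t + cnj (Y t)" unfolding kk Y_def ..
  finally show ?thesis .
qed

lemma m_LL[measurable]: "LL \<in> borel_measurable borel" unfolding LL_def by measurable
lemma m_RR[measurable]: "RR \<in> borel_measurable borel" unfolding RR_def by measurable
lemma m_Y[measurable]: "Y \<in> borel_measurable borel" unfolding Y_def Q_def by measurable

lemma i_LL: "set_integrable lborel ({0..2*pi}\<times>{0..2*pi}) LL"
  by (rule bnd_int[OF m_LL]) (unfold LL_def, intro bnd_intros)
lemma i_RR: "set_integrable lborel ({0..2*pi}\<times>{0..2*pi}) RR"
  by (rule bnd_int[OF m_RR]) (unfold RR_def, intro bnd_intros)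
lemma i_Y: "set_integrable lborel ({0..2*pi}\<times>{0..2*pi}) Y"
  by (rule bnd_int[OF m_Y]) (unfold Y_def Q_def, intro bnd_intros)
lemma i_cY: "set_integrable lborel ({0..2*pi}\<times>{0..2*pi}) (\<lambda>t. cnj (Y t))"
  by (rule bnd_int) (measurable, unfold Y_def Q_def, intro bnd_intros)

lemma Y_sum: "Y t = k1 (fst t) * (k2 (snd t) * (B (snd t) * cnj (B (snd t))))
   + (k1 (fst t) * (C (fst t) * cnj (C (fst t)))) * k2 (snd t)
   - (a * k1 (fst t)) * (k2 (snd t) * cnj (B (snd t)))
   - (a * (k1 (fst t) * cnj (C (fst t)))) * k2 (snd t)
   + k1 (fst t) * k2 (snd t) * a * cnj (D t)
   + (k1 (fst t) * cnj (C (fst t))) * (k2 (snd t) * B (snd t))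
   - k1 (fst t) * k2 (snd t) * B (snd t) * cnj (D t)
   - k1 (fst t) * k2 (snd t) * C (fst t) * cnj (D t)"
  unfolding Y_def Q_def by (simp add: algebra_simps)

end

context rifz
begin

lemma int_Y0: "(LINT t:{0..2*pi}\<times>{0..2*pi}|lborel. Y t) = 0"
proof -
  have i: "set_integrable lborel ({0..2*pi}\<times>{0..2*pi}) g" if "g \<in> borel_measurable borel" "bnd g" for g
    using bnd_int that by blast
  have iT1: "set_integrable lborel ({0..2*pi}\<times>{0..2*pi}) (\<lambda>t. k1 (fst t) * (k2 (snd t) * (B (snd t) * cnj (B (snd t)))))"
    by (rule i) (measurable, intro bnd_intros)
  have iT2: "set_integrable lborel ({0..2*pi}\<times>{0..2*pi}) (\<lambda>t. (k1 (fst t) * (C (fst t) * cnj (C (fst t)))) * k2 (snd t))"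
    by (rule i) (measurable, intro bnd_intros)
  have iT3: "set_integrable lborel ({0..2*pi}\<times>{0..2*pi}) (\<lambda>t. (a * k1 (fst t)) * (k2 (snd t) * cnj (B (snd t))))"
    by (rule i) (measurable, intro bnd_intros)
  have iT4: "set_integrable lborel ({0..2*pi}\<times>{0..2*pi}) (\<lambda>t. (a * (k1 (fst t) * cnj (C (fst t)))) * k2 (snd t))"
    by (rule i) (measurable, intro bnd_intros)
  have iT6: "set_integrable lborel ({0..2*pi}\<times>{0..2*pi}) (\<lambda>t. k1 (fst t) * k2 (snd t) * a * cnj (D t))"
    by (rule i) (measurable, intro bnd_intros)
  have iT5: "set_integrable lborel ({0..2*pi}\<times>{0..2*pi}) (\<lambda>t. (k1 (fst t) * cnj (C (fst t))) * (k2 (snd t) * B (snd t)))"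
    by (rule i) (measurable, intro bnd_intros)
  have iT7: "set_integrable lborel ({0..2*pi}\<times>{0..2*pi}) (\<lambda>t. k1 (fst t) * k2 (snd t) * B (snd t) * cnj (D t))"
    by (rule i) (measurable, intro bnd_intros)
  have iT8: "set_integrable lborel ({0..2*pi}\<times>{0..2*pi}) (\<lambda>t. k1 (fst t) * k2 (snd t) * C (fst t) * cnj (D t))"
    by (rule i) (measurable, intro bnd_intros)
  have "(LINT t:{0..2*pi}\<times>{0..2*pi}|lborel. Y t) =
     I1 * beta + gamma * I2 - (a * I1) * cnj (I2 * a) - (a * cnj (I1 * a)) * I2 + (a * I1) * cnj (I2 * a)
     + cnj (I1 * a) * (I2 * a) - I1 * beta - I2 * gamma"
    unfolding Y_sum
    by (simp only: set_integral_add set_integral_diff iT1 iT2 iT3 iT4 iT5 iT6 iT7 iT8 J1 J2 J3 J4 J5 J6 J7 J8)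
  also have "\<dots> = 0" by (simp add: algebra_simps)
  finally show ?thesis .
qed

lemma m_den[measurable]: "den \<in> borel_measurable borel"
  unfolding den_def by (intro borel_measurable_continuous_onI continuous_intros)

lemma m_Lr[measurable]: "Lr \<in> borel_measurable borel" unfolding Lr_def by measurable
lemma m_Rr[measurable]: "Rr \<in> borel_measurable borel" unfolding Rr_def by measurable

lemma main_eq: "(LINT t:{0..2*pi}\<times>{0..2*pi}|lborel. Lr t) = (LINT t:{0..2*pi}\<times>{0..2*pi}|lborel. Rr t)"
proof -
  have S: "{0..2*pi} \<times> {0..2*pi::real} \<in> sets lborel" by (simp add: borel_closed closed_Times)
  have "complex_of_real (LINT t:{0..2*pi}\<times>{0..2*pi}|lborel. Lr t) - complex_of_real (LINT t:{0..2*pi}\<times>{0..2*pi}|lborel. Rr t)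
      = (LINT t:{0..2*pi}\<times>{0..2*pi}|lborel. LL t) - (LINT t:{0..2*pi}\<times>{0..2*pi}|lborel. RR t)"
    by (simp only: set_integral_complex_of_real[symmetric] LL_eq RR_eq)
  also have "\<dots> = (LINT t:{0..2*pi}\<times>{0..2*pi}|lborel. LL t - RR t)"
    by (rule set_integral_diff(2)[OF i_LL i_RR, symmetric])
  also have "\<dots> = (LINT t:{0..2*pi}\<times>{0..2*pi}|lborel. Y t + cnj (Y t))"
  proof (rule set_lebesgue_integral_cong_AE[OF S])
    show "AE t\<in>{0..2*pi}\<times>{0..2*pi} in lborel. LL t - RR t = Y t + cnj (Y t)"
      using AE_not_in[OF countable_imp_null_set_lborel[OF Xd_count]] by eventually_elim (use LR_Y in auto)
  qed measurable
  also have "\<dots> = (LINT t:{0..2*pi}\<times>{0..2*pi}|lborel. Y t) + cnj (LINT t:{0..2*pi}\<times>{0..2*pi}|lborel. Y t)"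
    by (simp only: set_integral_add(2)[OF i_Y i_cY] set_integral_cnj)
  also have "\<dots> = 0" by (simp add: int_Y0)
  finally show ?thesis by simp
qed

lemma final_loc:
  "(LINT t:{0..2*pi}\<times>{0..2*pi}|lborel.
        (let e1 = cis (fst t); e2 = cis (snd t) in
          (cmod (bval phi z1 z2 - bval phi z1 e2 - bval phi e1 z2 + bval phi e1 e2))\<^sup>2
          / ((cmod (z1 - e1))\<^sup>2 * (cmod (z2 - e2))\<^sup>2))) =
   (LINT t:{0..2*pi}\<times>{0..2*pi}|lborel.
        (let e1 = cis (fst t); e2 = cis (snd t) in
          (1 - (cmod (bval phi e1 z2))\<^sup>2 - (cmod (bval phi z1 e2))\<^sup>2 + (cmod (phi z1 z2))\<^sup>2)
          / ((cmod (e1 - z1))\<^sup>2 * (cmod (e2 - z2))\<^sup>2)))"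
  (is "(LINT t:?S|lborel. ?FL t) = (LINT t:?S|lborel. ?FR t)")
proof -
  have S: "?S \<in> sets lborel" by (simp add: borel_closed closed_Times)
  have ba: "bval phi z1 z2 = a" unfolding a_def by (rule bval_phi) (use nozeros z1 z2 in auto)
  have bb: "bval phi z1 (cis y) = B y" for y unfolding B_def by (rule bval_phi, rule pnz_2[OF z1]) simp
  have bc: "bval phi (cis x) z2 = C x" for x unfolding C_def by (rule bval_phi, rule pnz_1[OF z2]) simp
  have FR: "?FR t = Rr t" for t
    by (simp add: Let_def Rr_def den_def bb bc a_def[symmetric] del: bval_def)
  have FL: "?FL t = Lr t" if "t \<notin> Xd" for t
  proof -
    have "p (cis (fst t)) (cis (snd t)) \<noteq> 0" using that unfolding Xd_def Z_def by auto
    hence bd: "bval phi (cis (fst t)) (cis (snd t)) = D t" unfolding D_def by (rule bval_phi)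
    show ?thesis
      by (simp add: Let_def Lr_def den_def bb bc ba bd norm_minus_commute del: bval_def)
  qed
  have mFL: "?FL \<in> borel_measurable borel"
  proof (rule measurable_discrete_difference[OF m_Lr Xd_count])
    show "\<And>x. x \<in> Xd \<Longrightarrow> {x} \<in> sets borel" by simp
  qed (use FL in auto)
  have "(LINT t:?S|lborel. ?FL t) = (LINT t:?S|lborel. Lr t)"
  proof (rule set_lebesgue_integral_cong_AE[OF S])
    show "AE t\<in>?S in lborel. ?FL t = Lr t"
      using AE_not_in[OF countable_imp_null_set_lborel[OF Xd_count]] by eventually_elim (use FL in auto)
  qed (use mFL in auto)
  also have "\<dots> = (LINT t:?S|lborel. Rr t)" by (rule main_eq)
  also have "\<dots> = (LINT t:?S|lborel. ?FR t)" by (simp only: FR)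
  finally show ?thesis .
qed

end


theorem lemma8p2:
  fixes c :: "nat \<Rightarrow> nat \<Rightarrow> complex" and m n :: nat and z1 z2 :: complex
  assumes bideg: "has_bidegree c m n"
    and nozeros: "\<forall>w1 w2. norm w1 < 1 \<longrightarrow> norm w2 < 1 \<longrightarrow> eval2 c m n w1 w2 \<noteq> 0"
    and ator: "atoral c m n"
    and z1: "norm z1 < 1" and z2: "norm z2 < 1"
  defines "\<phi> \<equiv> (\<lambda>w1 w2. eval2 (refl2 c m n) m n w1 w2 / eval2 c m n w1 w2)"
  shows "local_dirichlet \<phi> z1 z2 =
    1 / (4 * pi ^ 2) *
     (LINT t:{0..2*pi} \<times> {0..2*pi}|lborel.
        (let e1 = cis (fst t); e2 = cis (snd t) in
          (1 - (cmod (bval \<phi> e1 z2))\<^sup>2 - (cmod (bval \<phi> z1 e2))\<^sup>2 + (cmod (\<phi> z1 z2))\<^sup>2)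
          / ((cmod (e1 - z1))\<^sup>2 * (cmod (e2 - z2))\<^sup>2)))"
proof -
  interpret rifz c m n z1 z2
    by unfold_locales (use bideg nozeros ator z1 z2 in auto)
  have e: "\<phi> = phi" unfolding \<phi>_def phi_def by (simp add: fun_eq_iff)
  show ?thesis unfolding local_dirichlet_def e using final_loc by simp
qed

end
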